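(* Assume $\mathrm{char}(\Bbbk)\ne2$. The odd subalgebra $\Pi_-$ of $(\mathcal{Q}\mathit{Sym},\zeta_{\mathcal Q})$ equals Stembridge's Hopf algebra, i.e. the image of $\Theta$. The set $\{\eta_\beta\}_{\beta\text{ odd}}$ is a linear basis for $\Pi_-$, where for an odd composition $\beta$, $\eta_\beta=\sum_{\alpha\le\beta}2^{k(\alpha)}M_\alpha$ (sum over all compositions $\alpha$, not necessarily odd, with $\alpha\le\beta$).
   Context: $\mathcal{Q}\mathit{Sym}$ is the graded Hopf algebra of quasi-symmetric functions over $\Bbbk$ with basis $M_\alpha=\sum_{i_1<\cdots<i_k}x_{i_1}^{a_1}\cdots x_{i_k}^{a_k}$ for compositions $\alpha=(a_1,\dots,a_k)$, coproduct $\Delta(M_\alpha)=\sum_{\alpha=\beta\gamma}M_\beta\otimes M_\gamma$. $k(\alpha)$ is the number of parts of $\alpha$. For compositions $\alpha,\beta$ of $n$, $\alpha\le\beta$ means $\beta$ refines $\alpha$, i.e. $I(\alpha)\subseteq I(\beta)$ where $I(a_1,\dots,a_k)=\{a_1,a_1+a_2,\dots,a_1+\cdots+a_{k-1}\}$. A composition is odd if all its parts are odd. $\zeta_{\mathcal Q}$ is the character with $\zeta_{\mathcal Q}(M_\alpha)=1$ if $\alpha=(n)$ or $()$, $0$ otherwise; characters multiply by convolution and $\bar\varphi(h)=(-1)^n\varphi(h)$ in degree $n$. $\Pi_-$ is the largest graded subcoalgebra of $\mathcal{Q}\mathit{Sym}$ on which $\bar\zeta_{\mathcal Q}=\zeta_{\mathcal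 Q}^{-1}$. $\Theta\colon\mathcal{Q}\mathit{Sym}\to\mathcal{Q}\mathit{Sym}$ is the unique graded Hopf algebra morphism with $\zeta_{\mathcal Q}\circ\Theta=\bar\zeta_{\mathcal Q}^{-1}\zeta_{\mathcal Q}$ (this coincides with the map defined by Stembridge, whose image is Stembridge's peak Hopf algebra). *)

theory Defs
  imports Main
begin

text \<open>
  An element of QSym over the field 'k is encoded by its coefficient
  function f :: nat list => 'k in the monomial basis, i.e. it stands for
  Sum_alpha f(alpha) M_alpha; f must have finite support consisting of compositions.
  A tensor in QSym (x) QSym is encoded by its coefficients in the basis M_b (x) M_c.
  A linear functional on QSym is encoded by its values on the M_alpha.
\<close>

definition is_comp :: "nat list \<Rightarrow> bool" where
  "is_comp a \<longleftrightarrow> (\<forall>x\<in>set a. 0 < x)"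

definition comps :: "nat \<Rightarrow> nat list set" where
  "comps n = {a. is_comp a \<and> sum_list a = n}"

definition QSym :: "(nat list \<Rightarrow> 'k::field) set" where
  "QSym = {f. finite {a. f a \<noteq> 0} \<and> (\<forall>a. f a \<noteq> 0 \<longrightarrow> is_comp a)}"

definition Mon :: "nat list \<Rightarrow> nat list \<Rightarrow> 'k::field" where
  "Mon a = (\<lambda>b. if b = a then 1 else 0)"

definition hom_comp :: "nat \<Rightarrow> (nat list \<Rightarrow> 'k::field) \<Rightarrow> nat list \<Rightarrow> 'k" where
  "hom_comp n f = (\<lambda>a. if sum_list a = n then f a else 0)"

text \<open>Coproduct: Delta(M_a) = sum over a = b c of M_b (x) M_c.\<close>
definition coprod :: "(nat list \<Rightarrow> 'k::field) \<Rightarrow> (nat list \<times> nat list \<Rightarrow> 'k)" where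
  "coprod f = (\<lambda>(b, c). f (b @ c))"

definition tens :: "(nat list \<Rightarrow> 'k::field) \<Rightarrow> (nat list \<Rightarrow> 'k) \<Rightarrow> (nat list \<times> nat list \<Rightarrow> 'k)" where
  "tens f g = (\<lambda>(b, c). f b * g c)"

definition in_tensor_sq :: "(nat list \<Rightarrow> 'k::field) set \<Rightarrow> (nat list \<times> nat list \<Rightarrow> 'k) \<Rightarrow> bool" where
  "in_tensor_sq C t \<longleftrightarrow> (\<exists>ps. (\<forall>p\<in>set ps. fst p \<in> C \<and> snd p \<in> C) \<and>
       t = (\<lambda>x. sum_list (map (\<lambda>p. tens (fst p) (snd p) x) ps)))"

definition is_subspace :: "(nat list \<Rightarrow> 'k::field) set \<Rightarrow> bool" where
  "is_subspace C \<longleftrightarrow> C \<subseteq> QSym \<and> (\<lambda>_. 0) \<in> C \<and>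
     (\<forall>f\<in>C. \<forall>g\<in>C. (\<lambda>a. f a + g a) \<in> C) \<and> (\<forall>f\<in>C. \<forall>c. (\<lambda>a. c * f a) \<in> C)"

definition graded_subcoalgebra :: "(nat list \<Rightarrow> 'k::field) set \<Rightarrow> bool" where
  "graded_subcoalgebra C \<longleftrightarrow> is_subspace C \<and> (\<forall>f\<in>C. \<forall>n. hom_comp n f \<in> C) \<and>
     (\<forall>f\<in>C. in_tensor_sq C (coprod f))"

definition evalf :: "(nat list \<Rightarrow> 'k::field) \<Rightarrow> (nat list \<Rightarrow> 'k) \<Rightarrow> 'k" where
  "evalf phi f = (\<Sum>a\<in>{a. f a \<noteq> 0}. f a * phi a)"

definition conv :: "(nat list \<Rightarrow> 'k::field) \<Rightarrow> (nat list \<Rightarrow> 'k) \<Rightarrow> nat list \<Rightarrow> 'k" where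
  "conv phi psi = (\<lambda>a. \<Sum>i\<le>length a. phi (take i a) * psi (drop i a))"

definition counit :: "nat list \<Rightarrow> 'k::field" where
  "counit a = (if a = [] then 1 else 0)"

definition conv_inv :: "(nat list \<Rightarrow> 'k::field) \<Rightarrow> nat list \<Rightarrow> 'k" where
  "conv_inv phi = (THE psi. (\<forall>a. \<not> is_comp a \<longrightarrow> psi a = 0) \<and>
                             (\<forall>a. is_comp a \<longrightarrow> conv phi psi a = counit a))"

definition bar :: "(nat list \<Rightarrow> 'k::field) \<Rightarrow> nat list \<Rightarrow> 'k" where
  "bar phi = (\<lambda>a. (-1) ^ sum_list a * phi a)"

definition zetaQ :: "nat list \<Rightarrow> 'k::field" where
  "zetaQ a = (if is_comp a \<and> length a \<le> 1 then 1 else 0)"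

text \<open>Quasi-shuffles: M_a M_b = sum over the list qsh a b (with multiplicity).\<close>
fun qsh :: "nat list \<Rightarrow> nat list \<Rightarrow> nat list list" where
  "qsh [] ys = [ys]"
| "qsh xs [] = [xs]"
| "qsh (x # xs) (y # ys) =
     map ((#) x) (qsh xs (y # ys)) @ map ((#) y) (qsh (x # xs) ys) @ map ((#) (x + y)) (qsh xs ys)"

text \<open>A linear map QSym -> QSym encoded by its matrix T: the image of M_a is Sum_b T a b M_b.
  is_Theta T: T is a graded Hopf algebra morphism (algebra + coalgebra morphism; the antipode
  is then automatically preserved) with zeta_Q o Theta = bar(zeta_Q)^(-1) zeta_Q.\<close>
definition is_Theta :: "(nat list \<Rightarrow> nat list \<Rightarrow> 'k::field) \<Rightarrow> bool" where
  "is_Theta T \<longleftrightarrow>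
     (\<forall>a. \<not> is_comp a \<longrightarrow> T a = (\<lambda>_. 0)) \<and>
     (\<forall>a b. T a b \<noteq> 0 \<longrightarrow> is_comp b \<and> sum_list b = sum_list a) \<and>
     T [] = Mon [] \<and>
     (\<forall>a b c. is_comp a \<longrightarrow> is_comp b \<longrightarrow> is_comp c \<longrightarrow>
        sum_list (map (\<lambda>d. T d c) (qsh a b)) =
        (\<Sum>d\<in>comps (sum_list a). \<Sum>e\<in>comps (sum_list b).
            T a d * T b e * of_nat (count_list (qsh d e) c))) \<and>
     (\<forall>a b c. is_comp a \<longrightarrow> is_comp b \<longrightarrow> is_comp c \<longrightarrow>
        T a (b @ c) = (\<Sum>i\<le>length a. T (take i a) b * T (drop i a) c)) \<and>
     (\<forall>a. is_comp a \<longrightarrow> evalf zetaQ (T a) = conv (conv_inv (bar zetaQ)) zetaQ a)"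

definition Theta_mat :: "nat list \<Rightarrow> nat list \<Rightarrow> 'k::field" where
  "Theta_mat = (THE T. is_Theta T)"

definition apply_mat :: "(nat list \<Rightarrow> nat list \<Rightarrow> 'k::field) \<Rightarrow> (nat list \<Rightarrow> 'k) \<Rightarrow> nat list \<Rightarrow> 'k" where
  "apply_mat T f = (\<lambda>b. \<Sum>a\<in>{a. f a \<noteq> 0}. f a * T a b)"

definition Theta_image :: "(nat list \<Rightarrow> 'k::field) set" where
  "Theta_image = apply_mat Theta_mat ` QSym"

definition odd_ok :: "(nat list \<Rightarrow> 'k::field) set \<Rightarrow> bool" where
  "odd_ok C \<longleftrightarrow> graded_subcoalgebra C \<and>
     (\<forall>f\<in>C. evalf (bar zetaQ) f = evalf (conv_inv zetaQ) f)"

definition Pi_minus :: "(nat list \<Rightarrow> 'k::field) set" where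
  "Pi_minus = (THE C. odd_ok C \<and> (\<forall>D. odd_ok D \<longrightarrow> D \<subseteq> C))"

definition Iset :: "nat list \<Rightarrow> nat set" where
  "Iset a = {sum_list (take j a) | j. 1 \<le> j \<and> j < length a}"

definition comp_le :: "nat list \<Rightarrow> nat list \<Rightarrow> bool" where
  "comp_le a b \<longleftrightarrow> is_comp a \<and> is_comp b \<and> sum_list a = sum_list b \<and> Iset a \<subseteq> Iset b"

definition odd_comp :: "nat list \<Rightarrow> bool" where
  "odd_comp b \<longleftrightarrow> is_comp b \<and> (\<forall>x\<in>set b. odd x)"

definition eta :: "nat list \<Rightarrow> nat list \<Rightarrow> 'k::field" where
  "eta b = (\<lambda>a. if comp_le a b then 2 ^ length a else 0)"

end

theory Submission
  imports Defs
begin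


lemma two_ne_zero_char:
  assumes "CHAR('k::field) \<noteq> 2" shows "(2::'k) \<noteq> 0"
proof
  assume "(2::'k) = 0"
  then have "of_nat 2 = (0::'k)" by simp
  then have "CHAR('k) dvd 2" by (simp only: of_nat_eq_0_iff_char_dvd)
  then have d: "CHAR('k) dvd 2" .
  have "CHAR('k) \<le> 2" using dvd_imp_le[OF d] by (cases "CHAR('k) = 0") (use d in auto)
  moreover have "CHAR('k) \<noteq> 0" using d by (metis dvd_0_left_iff zero_neq_numeral)
  ultimately have "CHAR('k) = 1 \<or> CHAR('k) = 2" by linarith
  moreover have "CHAR('k) \<noteq> 1" using of_nat_eq_0_iff_char_dvd[of 1, where ?'a='k] by auto
  ultimately show False using assms by auto
qed



lemma is_comp_Nil[simp]: "is_comp []" by (simp add: is_comp_def)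
lemma is_comp_Cons[simp]: "is_comp (x#xs) \<longleftrightarrow> 0 < x \<and> is_comp xs" by (auto simp: is_comp_def)
lemma is_comp_append[simp]: "is_comp (xs @ ys) \<longleftrightarrow> is_comp xs \<and> is_comp ys" by (auto simp: is_comp_def)
lemma is_comp_take[intro,simp]: "is_comp xs \<Longrightarrow> is_comp (take i xs)" by (auto simp: is_comp_def dest: in_set_takeD)
lemma is_comp_drop[intro,simp]: "is_comp xs \<Longrightarrow> is_comp (drop i xs)" by (auto simp: is_comp_def dest: in_set_dropD)

lemma comp_sum_eq0: "is_comp a \<Longrightarrow> sum_list a = 0 \<longleftrightarrow> a = []"
  by (induction a) auto

lemma comp_len_le_sum: "is_comp a \<Longrightarrow> length a \<le> sum_list a"
  by (induction a) auto

lemma comp_elem_le_sum: "x \<in> set a \<Longrightarrow> x \<le> sum_list (a::nat list)"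
  using member_le_sum_list by blast

lemma finite_comps: "finite (comps n)"
proof -
  have "comps n \<subseteq> {xs. set xs \<subseteq> {0..n} \<and> length xs \<le> n}"
    using comp_len_le_sum comp_elem_le_sum by (fastforce simp: comps_def)
  moreover have "finite {xs. set xs \<subseteq> {0..n} \<and> length xs \<le> n}"
    by (rule finite_lists_length_le) simp
  ultimately show ?thesis by (rule finite_subset)
qed

lemma comps_0: "comps 0 = {[]}"
  using comp_sum_eq0 by (auto simp: comps_def)

lemma mem_comps[simp]: "c \<in> comps n \<longleftrightarrow> is_comp c \<and> sum_list c = n"
  by (simp add: comps_def)

lemma comps_pos: "0 < n \<Longrightarrow> comps n = (\<lambda>(p,ds). p # ds) ` (SIGMA p:{1..n}. comps (n - p))"
proof (intro set_eqI iffI)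
  fix c assume "0 < n" "c \<in> comps n"
  then obtain p ds where c: "c = p # ds" by (cases c) auto
  with \<open>c \<in> comps n\<close> show "c \<in> (\<lambda>(p,ds). p # ds) ` (SIGMA p:{1..n}. comps (n - p))"
    by (auto intro!: image_eqI[where x="(p,ds)"])
next
  fix c assume "c \<in> (\<lambda>(p,ds). p # ds) ` (SIGMA p:{1..n}. comps (n - p))"
  then show "c \<in> comps n" by auto
qed

lemma sum_comps_pos:
  assumes "0 < n"
  shows "(\<Sum>c\<in>comps n. F c) = (\<Sum>p\<in>{1..n}. \<Sum>ds\<in>comps (n - p). F (p # ds))"
proof -
  have inj: "inj_on (\<lambda>(p,ds). p # ds) (SIGMA p:{1..n}. comps (n - p))"
    by (auto simp: inj_on_def)
  have "(\<Sum>c\<in>comps n. F c) = (\<Sum>x\<in>(SIGMA p:{1..n}. comps (n - p)). F ((\<lambda>(p,ds). p # ds) x))"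
    unfolding comps_pos[OF assms] by (rule sum.reindex[OF inj, unfolded comp_def])
  also have "\<dots> = (\<Sum>p\<in>{1..n}. \<Sum>ds\<in>comps (n - p). F (p # ds))"
    by (subst sum.Sigma) (auto simp: finite_comps intro!: sum.cong split: prod.splits)
  finally show ?thesis .
qed

lemma sum_atMost_two:
  assumes "\<And>i. 2 \<le> i \<Longrightarrow> i \<le> n \<Longrightarrow> f i = 0" "1 \<le> n"
  shows "(\<Sum>i\<le>n. f i) = f 0 + f (1::nat)"
proof -
  have "(\<Sum>i\<le>n. f i) = (\<Sum>i\<in>{0,1}. f i)"
    using assms by (intro sum.mono_neutral_right) auto
  then show ?thesis by simp
qed

definition cinv :: "(nat list \<Rightarrow> 'k::field) \<Rightarrow> nat list \<Rightarrow> 'k" where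
  "cinv phi a = (if is_comp a then prod_list (map (\<lambda>x. - phi [x]) a) else 0)"

lemma conv_comp_Cons:
  assumes "\<And>a. is_comp a \<Longrightarrow> 2 \<le> length a \<Longrightarrow> phi a = 0" "is_comp (x#r)" "phi [] = 1"
  shows "conv phi psi (x#r) = psi (x#r) + phi [x] * psi r"
proof -
  have "conv phi psi (x#r) = (\<Sum>i\<le>length (x#r). phi (take i (x#r)) * psi (drop i (x#r)))"
    by (simp add: conv_def)
  also have "\<dots> = phi (take 0 (x#r)) * psi (drop 0 (x#r)) + phi (take 1 (x#r)) * psi (drop 1 (x#r))"
    by (rule sum_atMost_two) (use assms in \<open>auto intro!: assms(1)\<close>)
  finally show ?thesis using assms by simp
qed

lemma conv_inv_eq:
  fixes phi :: "nat list \<Rightarrow> 'k::field"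
  assumes "\<And>a. is_comp a \<Longrightarrow> 2 \<le> length a \<Longrightarrow> phi a = 0" "phi [] = 1"
  shows "conv_inv phi = cinv phi"
  unfolding conv_inv_def
proof (rule the_equality)
  have c0: "conv phi psi [] = psi []" for psi :: "nat list \<Rightarrow> 'k"
    using assms by (simp add: conv_def)
  have cc: "conv phi psi (x#r) = psi (x#r) + phi [x] * psi r" if "is_comp (x#r)" for x r and psi :: "nat list \<Rightarrow> 'k"
    by (rule conv_comp_Cons) (use assms that in auto)
  show "(\<forall>a. \<not> is_comp a \<longrightarrow> cinv phi a = 0) \<and> (\<forall>a. is_comp a \<longrightarrow> conv phi (cinv phi) a = counit a)"
  proof (intro conjI allI impI)
    fix a :: "nat list" assume "is_comp a"
    then show "conv phi (cinv phi) a = counit a"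
      by (cases a) (auto simp: c0 cc cinv_def counit_def)
  qed (simp add: cinv_def)
  fix psi assume h: "(\<forall>a. \<not> is_comp a \<longrightarrow> psi a = 0) \<and> (\<forall>a. is_comp a \<longrightarrow> conv phi psi a = counit a)"
  show "psi = cinv phi"
  proof
    fix a show "psi a = cinv phi a"
    proof (induction a)
      case Nil
      have "conv phi psi [] = counit []" using h by simp
      then show ?case by (simp add: c0 cinv_def counit_def)
    next
      case (Cons x r)
      show ?case
      proof (cases "is_comp (x#r)")
        case True
        have "conv phi psi (x#r) = counit (x#r)" using h True by blast
        then have "psi (x#r) + phi [x] * psi r = 0"
          using cc[OF True] by (simp add: counit_def)
        then show ?thesis using Cons True by (auto simp: cinv_def algebra_simps eq_neg_iff_add_eq_0[symmetric])
      qed (use h in \<open>auto simp: cinv_def\<close>)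
    qed
  qed
qed



lemma qsh_Nil2[simp]: "qsh xs [] = [xs]"
  by (cases xs) auto

lemma sum_atMost_Suc_take_drop:
  "(\<Sum>k\<le>Suc (length d). F (take k (z#d)) (drop k (z#d))) = F [] (z#d) + (\<Sum>k\<le>length d. F (z # take k d) (drop k d))"
  by (simp add: sum.atMost_Suc_shift del: sum.atMost_Suc atMost_Suc)

lemma qsh_coprod:
  "(\<Sum>d\<leftarrow>qsh a b. \<Sum>k\<le>length d. F (take k d) (drop k d)) =
   (\<Sum>i\<le>length a. \<Sum>j\<le>length b. \<Sum>u\<leftarrow>qsh (take i a) (take j b). \<Sum>v\<leftarrow>qsh (drop i a) (drop j b). F u v)"
proof (induction a b arbitrary: F rule: qsh.induct)
  case (1 ys)
  then show ?case by simp
next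
  case (2 v va)
  then show ?case by simp
next
  case (3 x xs y ys)
  define a where "a = x # xs"
  define b where "b = y # ys"
  have qab: "qsh a b = map ((#) x) (qsh xs b) @ map ((#) y) (qsh a ys) @ map ((#) (x + y)) (qsh xs ys)"
    by (simp add: a_def b_def)
  define H where "H i j = (\<Sum>u\<leftarrow>qsh (take i a) (take j b). \<Sum>v\<leftarrow>qsh (drop i a) (drop j b). F u v)" for i j
  have G: "(\<Sum>d\<leftarrow>map ((#) z) L. \<Sum>k\<le>length d. F (take k d) (drop k d)) =
        (\<Sum>d\<leftarrow>map ((#) z) L. F [] d) + (\<Sum>d\<leftarrow>L. \<Sum>k\<le>length d. F (z # take k d) (drop k d))" for z L
    by (induction L) (simp_all add: sum_atMost_Suc_take_drop add_ac del: sum.atMost_Suc atMost_Suc)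
  have LHS: "(\<Sum>d\<leftarrow>qsh a b. \<Sum>k\<le>length d. F (take k d) (drop k d)) =
     (\<Sum>d\<leftarrow>qsh a b. F [] d)
     + (\<Sum>d\<leftarrow>qsh xs b. \<Sum>k\<le>length d. F (x # take k d) (drop k d))
     + (\<Sum>d\<leftarrow>qsh a ys. \<Sum>k\<le>length d. F (y # take k d) (drop k d))
     + (\<Sum>d\<leftarrow>qsh xs ys. \<Sum>k\<le>length d. F ((x+y) # take k d) (drop k d))"
    unfolding qab map_append sum_list_append G by (simp add: add_ac)
  have X1: "(\<Sum>d\<leftarrow>qsh xs b. \<Sum>k\<le>length d. F (x # take k d) (drop k d)) =
      (\<Sum>i\<le>length xs. H (Suc i) 0) +
      (\<Sum>i\<le>length xs. \<Sum>j\<le>length ys. \<Sum>u\<leftarrow>qsh (take i xs) (y # take j ys). \<Sum>v\<leftarrow>qsh (drop i xs) (drop j ys). F (x # u) v)"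
    unfolding b_def 3(1)[of "\<lambda>u v. F (x#u) v"]
    by (simp add: sum.atMost_Suc_shift sum.distrib H_def a_def b_def del: sum.atMost_Suc atMost_Suc)
  have X2: "(\<Sum>d\<leftarrow>qsh a ys. \<Sum>k\<le>length d. F (y # take k d) (drop k d)) =
      (\<Sum>j\<le>length ys. H 0 (Suc j)) +
      (\<Sum>i\<le>length xs. \<Sum>j\<le>length ys. \<Sum>u\<leftarrow>qsh (x # take i xs) (take j ys). \<Sum>v\<leftarrow>qsh (drop i xs) (drop j ys). F (y # u) v)"
    unfolding a_def 3(2)[of "\<lambda>u v. F (y#u) v"]
    by (simp add: sum.atMost_Suc_shift sum.distrib H_def a_def b_def del: sum.atMost_Suc atMost_Suc)
  have X3: "(\<Sum>d\<leftarrow>qsh xs ys. \<Sum>k\<le>length d. F ((x+y) # take k d) (drop k d)) =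
      (\<Sum>i\<le>length xs. \<Sum>j\<le>length ys. \<Sum>u\<leftarrow>qsh (take i xs) (take j ys). \<Sum>v\<leftarrow>qsh (drop i xs) (drop j ys). F ((x+y) # u) v)"
    by (rule 3(3)[of "\<lambda>u v. F ((x+y)#u) v"])
  have HSS: "H (Suc i) (Suc j) =
      (\<Sum>u\<leftarrow>qsh (take i xs) (y # take j ys). \<Sum>v\<leftarrow>qsh (drop i xs) (drop j ys). F (x # u) v)
    + (\<Sum>u\<leftarrow>qsh (x # take i xs) (take j ys). \<Sum>v\<leftarrow>qsh (drop i xs) (drop j ys). F (y # u) v)
    + (\<Sum>u\<leftarrow>qsh (take i xs) (take j ys). \<Sum>v\<leftarrow>qsh (drop i xs) (drop j ys). F ((x+y) # u) v)" for i j
    by (simp add: H_def a_def b_def comp_def add_ac)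
  have RHS: "(\<Sum>i\<le>length a. \<Sum>j\<le>length b. H i j) =
     H 0 0 + (\<Sum>j\<le>length ys. H 0 (Suc j)) + (\<Sum>i\<le>length xs. H (Suc i) 0)
     + (\<Sum>i\<le>length xs. \<Sum>j\<le>length ys. H (Suc i) (Suc j))"
    by (simp add: a_def b_def sum.atMost_Suc_shift sum.distrib add_ac del: sum.atMost_Suc atMost_Suc)
  have H00: "H 0 0 = (\<Sum>d\<leftarrow>qsh a b. F [] d)" by (simp add: H_def)
  show ?case
    unfolding a_def[symmetric] b_def[symmetric] H_def[symmetric] RHS LHS X1 X2 X3 HSS H00
    by (simp add: sum.distrib add_ac)
qed



lemma qsh_sum: "d \<in> set (qsh a b) \<Longrightarrow> sum_list d = sum_list a + sum_list b"
  by (induction a b arbitrary: d rule: qsh.induct) auto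

lemma qsh_comp: "is_comp a \<Longrightarrow> is_comp b \<Longrightarrow> d \<in> set (qsh a b) \<Longrightarrow> is_comp d"
proof (induction a b arbitrary: d rule: qsh.induct)
  case (3 x xs y ys)
  from 3(6) have "d \<in> (#) x ` set (qsh xs (y#ys)) \<or> d \<in> (#) y ` set (qsh (x#xs) ys) \<or> d \<in> (#) (x+y) ` set (qsh xs ys)"
    by simp
  then show ?case
  proof (elim disjE imageE)
    fix e assume "e \<in> set (qsh xs (y#ys))" "d = x # e"
    then show ?thesis using 3(1)[of e] 3(4,5) by simp
  next
    fix e assume "e \<in> set (qsh (x#xs) ys)" "d = y # e"
    then show ?thesis using 3(2)[of e] 3(4,5) by simp
  next
    fix e assume "e \<in> set (qsh xs ys)" "d = (x+y) # e"
    then show ?thesis using 3(3)[of e] 3(4,5) by simp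
  qed
qed auto

lemma qsh_nil_sum: "(\<Sum>d\<leftarrow>qsh a b. if d = [] then (1::'k::comm_ring_1) else 0) = (if a = [] \<and> b = [] then 1 else 0)"
  by (induction a b rule: qsh.induct) (simp_all add: comp_def)

lemma count_map_Cons_nil: "count_list (map ((#) z) L) [] = 0"
  by (induction L) simp_all

lemma count_qsh_nil: "count_list (qsh a b) [] = (if a = [] \<and> b = [] then 1 else 0)"
  by (induction a b rule: qsh.induct) (simp_all add: count_list_append count_map_Cons_nil)

definition psi :: "nat list \<Rightarrow> 'k::field" where
  "psi d = (-1) ^ (sum_list d + length d)"

definition zeta0 :: "nat list \<Rightarrow> 'k::field" where
  "zeta0 d = (if length d \<le> 1 then 1 else 0)"

definition nu :: "nat list \<Rightarrow> 'k::field" where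
  "nu d = (\<Sum>k\<le>length d. psi (take k d) * zeta0 (drop k d))"

lemma psi_Nil[simp]: "psi [] = 1" by (simp add: psi_def)
lemma psi_Cons: "psi (x # d) = (-1) ^ Suc x * psi d"
  by (simp add: psi_def power_add)

lemma zeta0_Nil[simp]: "zeta0 [] = 1" by (simp add: zeta0_def)
lemma zeta0_Cons: "zeta0 (x # d) = (if d = [] then 1 else 0)" by (simp add: zeta0_def)

lemma psi_char: "(\<Sum>d\<leftarrow>qsh a b. psi d) = (psi a * psi b :: 'k::field)"
proof (induction a b rule: qsh.induct)
  case (3 x xs y ys)
  have "(\<Sum>d\<leftarrow>qsh (x # xs) (y # ys). psi d) =
     (-1) ^ Suc x * (\<Sum>d\<leftarrow>qsh xs (y#ys). psi d) + (-1) ^ Suc y * (\<Sum>d\<leftarrow>qsh (x#xs) ys. psi d)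
     + (-1) ^ Suc (x + y) * (\<Sum>d\<leftarrow>qsh xs ys. psi d :: 'k)"
    by (simp add: psi_Cons comp_def sum_list_const_mult del: power_Suc)
  also have "\<dots> = psi (x # xs) * psi (y # ys)"
    unfolding 3 psi_Cons by (simp add: power_add algebra_simps)
  finally show ?case .
qed simp_all

lemma zeta0_char: "(\<Sum>d\<leftarrow>qsh a b. zeta0 d) = (zeta0 a * zeta0 b :: 'k::field)"
proof (induction a b rule: qsh.induct)
  case (3 x xs y ys)
  have "(\<Sum>d\<leftarrow>qsh (x # xs) (y # ys). zeta0 d) =
     (\<Sum>d\<leftarrow>qsh xs (y#ys). if d = [] then 1 else 0) + (\<Sum>d\<leftarrow>qsh (x#xs) ys. if d = [] then 1 else 0)
     + (\<Sum>d\<leftarrow>qsh xs ys. if d = [] then 1 else (0::'k))"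
    by (simp add: zeta0_Cons comp_def)
  also have "\<dots> = zeta0 (x # xs) * zeta0 (y # ys)"
    unfolding qsh_nil_sum by (simp add: zeta0_Cons)
  finally show ?case .
qed simp_all

lemma nu_char: "(\<Sum>d\<leftarrow>qsh a b. nu d) = (nu a * nu b :: 'k::field)"
proof -
  have "(\<Sum>d\<leftarrow>qsh a b. nu d) = (\<Sum>d\<leftarrow>qsh a b. \<Sum>k\<le>length d. psi (take k d) * zeta0 (drop k d) :: 'k)"
    by (simp add: nu_def)
  also have "\<dots> = (\<Sum>i\<le>length a. \<Sum>j\<le>length b. \<Sum>u\<leftarrow>qsh (take i a) (take j b). \<Sum>v\<leftarrow>qsh (drop i a) (drop j b). psi u * zeta0 v)"
    by (rule qsh_coprod)
  also have "\<dots> = (\<Sum>i\<le>length a. \<Sum>j\<le>length b. (psi (take i a) * zeta0 (drop i a)) * (psi (take j b) * zeta0 (drop j b)))"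
    by (simp add: sum_list_const_mult sum_list_mult_const psi_char zeta0_char mult_ac)
  also have "\<dots> = nu a * nu b"
    by (simp add: nu_def sum_product)
  finally show ?thesis .
qed

lemma nu_Nil[simp]: "nu [] = 1" by (simp add: nu_def)

lemma nu_Cons: "nu (x # r) = (if r = [] then 1 else 0) - (-1) ^ x * nu r"
proof -
  have "nu (x # r) = psi [] * zeta0 (x # r) + (\<Sum>k\<le>length r. psi (x # take k r) * zeta0 (drop k r))"
    unfolding nu_def by (simp add: sum.atMost_Suc_shift del: sum.atMost_Suc atMost_Suc)
  also have "\<dots> = (if r = [] then 1 else 0) - (-1) ^ x * nu r"
    by (simp add: psi_Cons zeta0_Cons nu_def sum_distrib_left sum_negf mult.assoc)
  finally show ?thesis .
qed

lemma nu_odd: "r \<noteq> [] \<Longrightarrow> \<forall>x\<in>set r. odd x \<Longrightarrow> nu r = (2::'k::field)"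
proof (induction r)
  case (Cons x r)
  then show ?case by (cases "r = []") (auto simp: nu_Cons neg_one_odd_power)
qed simp

lemma zetaQ_long: "is_comp a \<Longrightarrow> 2 \<le> length a \<Longrightarrow> zetaQ a = 0"
  by (simp add: zetaQ_def)

lemma conv_inv_zetaQ: "conv_inv (zetaQ :: nat list \<Rightarrow> 'k::field) a = (if is_comp a then (-1) ^ length a else 0)"
proof -
  have "conv_inv (zetaQ :: nat list \<Rightarrow> 'k) = cinv zetaQ"
    by (rule conv_inv_eq) (auto simp: zetaQ_def)
  moreover have "prod_list (map (\<lambda>x. - (zetaQ [x] :: 'k)) a) = (-1) ^ length a" if "is_comp a"
    using that by (induction a) (auto simp: zetaQ_def)
  ultimately show ?thesis by (simp add: cinv_def)
qed

lemma conv_inv_bar: "conv_inv (bar (zetaQ :: nat list \<Rightarrow> 'k::field)) a = (if is_comp a then psi a else 0)"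
proof -
  have "conv_inv (bar zetaQ :: nat list \<Rightarrow> 'k) = cinv (bar zetaQ)"
    by (rule conv_inv_eq) (auto simp: zetaQ_def bar_def)
  moreover have "prod_list (map (\<lambda>x. - (bar zetaQ [x] :: 'k)) a) = psi a" if "is_comp a"
    using that by (induction a) (auto simp: zetaQ_def bar_def psi_Cons)
  ultimately show ?thesis by (simp add: cinv_def)
qed

lemma zetaQ_comp: "is_comp a \<Longrightarrow> zetaQ a = zeta0 a"
  by (simp add: zetaQ_def zeta0_def)

lemma nu_conv: "is_comp a \<Longrightarrow> conv (conv_inv (bar zetaQ)) zetaQ a = (nu a :: 'k::field)"
  unfolding conv_def nu_def
  by (intro sum.cong) (auto simp: conv_inv_bar zetaQ_comp)



lemma sum_triangle: "(\<Sum>i\<le>n. \<Sum>j\<le>n - i. G i (i + j)) = (\<Sum>k\<le>(n::nat). \<Sum>i\<le>k. G i k)"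
proof -
  have 1: "(\<Sum>j\<le>n-i. G i (i+j)) = (\<Sum>k\<in>{k. k \<in> {..n} \<and> i \<le> k}. G i k)" if "i \<le> n" for i
  proof -
    have "(\<Sum>j\<le>n-i. G i (i+j)) = (\<Sum>k\<in>{0+i..(n-i)+i}. G i k)"
      by (subst sum.shift_bounds_cl_nat_ivl) (simp add: atMost_atLeast0 add.commute)
    also have "{0+i..(n-i)+i} = {k. k \<in> {..n} \<and> i \<le> k}" using that by auto
    finally show ?thesis .
  qed
  have "(\<Sum>i\<le>n. \<Sum>j\<le>n - i. G i (i + j)) = (\<Sum>i\<le>n. \<Sum>k\<in>{k. k \<in> {..n} \<and> i \<le> k}. G i k)"
    by (intro sum.cong refl 1) simp
  also have "\<dots> = (\<Sum>k\<le>n. \<Sum>i\<in>{i. i \<in> {..n} \<and> i \<le> k}. G i k)"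
    by (rule sum.swap_restrict) auto
  also have "\<dots> = (\<Sum>k\<le>(n::nat). \<Sum>i\<le>k. G i k)"
    by (intro sum.cong refl) auto
  finally show ?thesis .
qed

lemma sum_atMost_last: "(\<And>i. i < n \<Longrightarrow> f i = 0) \<Longrightarrow> (\<Sum>i\<le>(n::nat). f i) = f n"
proof -
  assume h: "\<And>i. i < n \<Longrightarrow> f i = 0"
  have "(\<Sum>i\<le>n. f i) = (\<Sum>i\<in>{n}. f i)"
    using h by (intro sum.mono_neutral_right) auto
  then show ?thesis by simp
qed

lemma sum_atMost_first: "(\<And>i. 0 < i \<Longrightarrow> i \<le> n \<Longrightarrow> f i = 0) \<Longrightarrow> (\<Sum>i\<le>(n::nat). f i) = f 0"
proof -
  assume h: "\<And>i. 0 < i \<Longrightarrow> i \<le> n \<Longrightarrow> f i = 0"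
  have "(\<Sum>i\<le>n. f i) = (\<Sum>i\<in>{0}. f i)"
    using h by (intro sum.mono_neutral_right) auto
  then show ?thesis by simp
qed

fun Tr :: "nat list \<Rightarrow> nat list \<Rightarrow> 'k::field" where
  "Tr a [] = (if a = [] then 1 else 0)"
| "Tr a (x # cs) = (\<Sum>i\<le>length a. (if sum_list (take i a) = x then nu (take i a) else 0) * Tr (drop i a) cs)"

definition TT :: "nat list \<Rightarrow> nat list \<Rightarrow> 'k::field" where
  "TT a c = (if is_comp a \<and> is_comp c then Tr a c else 0)"

lemma Tr_supp: "(Tr a c :: 'k::field) \<noteq> 0 \<Longrightarrow> sum_list c = sum_list a"
proof (induction c arbitrary: a)
  case Nil then show ?case by (auto split: if_splits)
next
  case (Cons x cs)
  then obtain i where "i \<le> length a" and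
    ne: "(if sum_list (take i a) = x then nu (take i a) else 0) * Tr (drop i a) cs \<noteq> (0::'k)"
    by (auto elim!: sum.not_neutral_contains_not_neutral)
  then have "sum_list (take i a) = x" "(Tr (drop i a) cs :: 'k) \<noteq> 0" by (auto split: if_splits)
  then have "sum_list cs = sum_list (drop i a)" using Cons.IH by blast
  then show ?case using \<open>sum_list (take i a) = x\<close>
    by (metis append_take_drop_id sum_list.Cons sum_list_append)
qed

lemma Tr_Nil_left: "is_comp c \<Longrightarrow> Tr [] c = (if c = [] then 1 else 0)"
  by (cases c) auto

lemma Tr_single: "(Tr a [n] :: 'k::field) = (if sum_list a = n then nu a else 0)"
proof -
  have "(Tr a [n] :: 'k) = (if sum_list (take (length a) a) = n then nu (take (length a) a) else 0) * Tr (drop (length a) a) []"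
    by (simp only: Tr.simps(2), rule sum_atMost_last) auto
  then show ?thesis by (simp del: Tr.simps(2))
qed

lemma Tr_append: "(Tr a (b @ c) :: 'k::field) = (\<Sum>i\<le>length a. Tr (take i a) b * Tr (drop i a) c)"
proof (induction b arbitrary: a)
  case Nil
  have "(Tr a ([] @ c) :: 'k) = Tr (take 0 a) [] * Tr (drop 0 a) c" by simp
  also have "\<dots> = (\<Sum>i\<le>length a. Tr (take i a) [] * Tr (drop i a) c)"
    by (rule sum_atMost_first[symmetric]) auto
  finally show ?case .
next
  case (Cons x bs)
  define n where "n = length a"
  define G where "G i k = (if sum_list (take i a) = x then nu (take i a) else 0) *
        Tr (drop i (take k a)) bs * (Tr (drop k a) c :: 'k)" for i k
  have "(Tr a ((x # bs) @ c) :: 'k) = (\<Sum>i\<le>n. (if sum_list (take i a) = x then nu (take i a) else 0) *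
       (\<Sum>j\<le>n - i. Tr (take j (drop i a)) bs * Tr (drop j (drop i a)) c))"
    by (simp add: Cons.IH n_def)
  also have "\<dots> = (\<Sum>i\<le>n. \<Sum>j\<le>n - i. G i (i + j))"
    by (intro sum.cong refl) (simp add: sum_distrib_left G_def drop_take mult.assoc add.commute)
  also have "\<dots> = (\<Sum>k\<le>n. \<Sum>i\<le>k. G i k)" by (rule sum_triangle)
  also have "\<dots> = (\<Sum>k\<le>n. Tr (take k a) (x # bs) * Tr (drop k a) c)"
    by (intro sum.cong refl) (auto simp: G_def sum_distrib_right n_def min_absorb1 intro!: sum.cong)
  finally show ?case by (simp add: n_def)
qed



definition coef :: "nat list \<Rightarrow> nat \<Rightarrow> nat \<Rightarrow> 'k::field" where
  "coef a i p = (if sum_list (take i a) = p then nu (take i a) else 0)"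

lemma Tr_Cons_coef: "Tr a (p # ds) = (\<Sum>i\<le>length a. coef a i p * Tr (drop i a) ds)"
  by (simp add: coef_def)

definition Lhs :: "nat list \<Rightarrow> nat list \<Rightarrow> nat list \<Rightarrow> 'k::field" where
  "Lhs a b c = (\<Sum>d\<leftarrow>qsh a b. Tr d c)"

definition Rhs :: "nat list \<Rightarrow> nat list \<Rightarrow> nat list \<Rightarrow> 'k::field" where
  "Rhs a b c = (\<Sum>d\<in>comps (sum_list a). \<Sum>e\<in>comps (sum_list b).
      Tr a d * Tr b e * of_nat (count_list (qsh d e) c))"

lemma sum_list_cong_set: "(\<And>x. x \<in> set L \<Longrightarrow> f x = g x) \<Longrightarrow> sum_list (map f L) = sum_list (map g L)"
  by (metis map_cong)

lemma Lhs_rec: "(Lhs a b (x # cs) :: 'k::field) = (\<Sum>i\<le>length a. \<Sum>j\<le>length b.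
    (if sum_list (take i a) + sum_list (take j b) = x then nu (take i a) * nu (take j b) else 0) *
    Lhs (drop i a) (drop j b) cs)"
proof -
  define F where "F u v = (if sum_list u = x then nu u else 0) * (Tr v cs :: 'k)" for u v
  have "(Lhs a b (x # cs) :: 'k) = (\<Sum>d\<leftarrow>qsh a b. \<Sum>k\<le>length d. F (take k d) (drop k d))"
    by (simp add: Lhs_def F_def)
  also have "\<dots> = (\<Sum>i\<le>length a. \<Sum>j\<le>length b. \<Sum>u\<leftarrow>qsh (take i a) (take j b). \<Sum>v\<leftarrow>qsh (drop i a) (drop j b). F u v)"
    by (rule qsh_coprod)
  also have "\<dots> = (\<Sum>i\<le>length a. \<Sum>j\<le>length b.
    (if sum_list (take i a) + sum_list (take j b) = x then nu (take i a) * nu (take j b) else 0) *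
    Lhs (drop i a) (drop j b) cs)"
  proof (intro sum.cong refl)
    fix i j
    have "(\<Sum>u\<leftarrow>qsh (take i a) (take j b). \<Sum>v\<leftarrow>qsh (drop i a) (drop j b). F u v) =
      (\<Sum>u\<leftarrow>qsh (take i a) (take j b). (if sum_list (take i a) + sum_list (take j b) = x then nu u else 0) * Lhs (drop i a) (drop j b) cs)"
      by (intro sum_list_cong_set) (simp add: F_def Lhs_def sum_list_const_mult qsh_sum)
    also have "\<dots> = (if sum_list (take i a) + sum_list (take j b) = x then nu (take i a) * nu (take j b) else 0) *
      Lhs (drop i a) (drop j b) cs"
      by (simp add: sum_list_mult_const nu_char)
    finally show "(\<Sum>u\<leftarrow>qsh (take i a) (take j b). \<Sum>v\<leftarrow>qsh (drop i a) (drop j b). F u v) = \<dots>" .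
  qed
  finally show ?thesis .
qed

lemma Lhs_Nil: "(Lhs a b [] :: 'k::field) = (if a = [] \<and> b = [] then 1 else 0)"
proof -
  have "(Lhs a b [] :: 'k) = (\<Sum>d\<leftarrow>qsh a b. if d = [] then 1 else 0)"
    unfolding Lhs_def by (intro sum_list_cong_set) simp
  then show ?thesis by (simp add: qsh_nil_sum)
qed

lemma Lhs_Nil1: "(Lhs [] b c :: 'k::field) = Tr b c" by (simp add: Lhs_def)
lemma Lhs_Nil2: "(Lhs a [] c :: 'k::field) = Tr a c" by (simp add: Lhs_def)

lemma sum_comps_single:
  fixes f :: "nat list \<Rightarrow> 'k::field"
  assumes "is_comp c"
  shows "(\<Sum>e\<in>comps n. f e * (if e = c then 1 else 0)) = (if sum_list c = n then f c else 0)"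
proof -
  have "(\<Sum>e\<in>comps n. f e * (if e = c then 1 else 0)) = (\<Sum>e\<in>comps n. if e = c then f e else 0)"
    by (intro sum.cong) auto
  also have "\<dots> = (if c \<in> comps n then f c else 0)"
    by (simp add: sum.delta' finite_comps)
  finally show ?thesis using assms by auto
qed

lemma count_single: "count_list [e] c = (if e = c then 1 else 0)" by simp

lemma Rhs_Nil1:
  assumes "is_comp b" "is_comp c"
  shows "(Rhs [] b c :: 'k::field) = Tr b c"
proof -
  have "(Rhs [] b c :: 'k) = (\<Sum>e\<in>comps (sum_list b). Tr [] [] * Tr b e * of_nat (count_list (qsh [] e) c))"
    unfolding Rhs_def comps_0 sum_list.Nil by simp
  also have "\<dots> = (\<Sum>e\<in>comps (sum_list b). Tr b e * (if e = c then 1 else 0))"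
    by (intro sum.cong refl) simp
  also have "\<dots> = (if sum_list c = sum_list b then Tr b c else 0)"
    by (rule sum_comps_single) (use assms in auto)
  also have "\<dots> = Tr b c" using Tr_supp by fastforce
  finally show ?thesis .
qed

lemma Rhs_Nil2:
  assumes "is_comp a" "is_comp c"
  shows "(Rhs a [] c :: 'k::field) = Tr a c"
proof -
  have "(Rhs a [] c :: 'k) = (\<Sum>e\<in>comps (sum_list a). Tr a e * Tr [] [] * of_nat (count_list (qsh e []) c))"
    unfolding Rhs_def comps_0 sum_list.Nil by simp
  also have "\<dots> = (\<Sum>e\<in>comps (sum_list a). Tr a e * (if e = c then 1 else 0))"
    by (intro sum.cong refl) simp
  also have "\<dots> = (if sum_list c = sum_list a then Tr a c else 0)"
    by (rule sum_comps_single) (use assms in auto)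
  also have "\<dots> = Tr a c" using Tr_supp by fastforce
  finally show ?thesis .
qed

lemma comps_nonempty: "d \<in> comps n \<Longrightarrow> 0 < n \<Longrightarrow> d \<noteq> []"
  by auto

lemma Rhs_Nil_nonempty:
  assumes "a \<noteq> []" "is_comp a"
  shows "(Rhs a b [] :: 'k::field) = 0"
proof -
  have "0 < sum_list a" using assms comp_sum_eq0 by (metis gr0I)
  then show ?thesis
    unfolding Rhs_def by (intro sum.neutral ballI) (auto simp: count_qsh_nil)
qed



lemma count_map_Cons: "count_list (map ((#) z) L) (x#cs) = (if z = x then count_list L cs else 0)"
  by (induction L) auto

lemma count_qsh_Cons: "count_list (qsh (p#ds) (q#es)) (x#cs) =
   (if p = x then count_list (qsh ds (q#es)) cs else 0) + (if q = x then count_list (qsh (p#ds) es) cs else 0)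
   + (if p + q = x then count_list (qsh ds es) cs else 0)"
  by (simp add: count_list_append count_map_Cons)

lemma sum_take_le: "sum_list (take i a) \<le> sum_list (a::nat list)"
  by (metis append_take_drop_id le_add1 sum_list_append)

lemma sum_take_drop: "sum_list (take i a) + sum_list (drop i a) = sum_list (a::nat list)"
  by (metis append_take_drop_id sum_list_append)

lemma sum_take_pos: "is_comp a \<Longrightarrow> 0 < i \<Longrightarrow> i \<le> length a \<Longrightarrow> 0 < sum_list (take i a)"
  by (metis comp_sum_eq0 is_comp_take gr0I le_zero_eq length_0_conv take_eq_Nil)

lemma sum_comps_hd:
  fixes H :: "nat list \<Rightarrow> 'k::field"
  assumes "is_comp a" "0 < p" "0 < sum_list a"
  shows "(\<Sum>d\<in>comps (sum_list a). if hd d = p then Tr a d * H (tl d) else 0) =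
         (\<Sum>i\<le>length a. coef a i p * (\<Sum>ds\<in>comps (sum_list (drop i a)). Tr (drop i a) ds * H ds))"
proof -
  define n where "n = sum_list a"
  have "(\<Sum>d\<in>comps n. if hd d = p then Tr a d * H (tl d) else 0) =
        (\<Sum>q\<in>{1..n}. \<Sum>ds\<in>comps (n - q). if q = p then Tr a (q#ds) * H ds else 0)"
    using assms by (subst sum_comps_pos) (simp_all add: n_def cong: if_cong)
  also have "\<dots> = (\<Sum>q\<in>{1..n}. if q = p then (\<Sum>ds\<in>comps (n - q). Tr a (q#ds) * H ds) else 0)"
    by (intro sum.cong refl) auto
  also have "\<dots> = (if p \<le> n then (\<Sum>ds\<in>comps (n - p). Tr a (p#ds) * H ds) else 0)"
    using assms(2) by (simp add: sum.delta)
  also have "\<dots> = (\<Sum>i\<le>length a. coef a i p * (\<Sum>ds\<in>comps (sum_list (drop i a)). Tr (drop i a) ds * H ds))"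
  proof (cases "p \<le> n")
    case True
    have "(\<Sum>ds\<in>comps (n - p). Tr a (p#ds) * H ds) = (\<Sum>ds\<in>comps (n - p). \<Sum>i\<le>length a. coef a i p * Tr (drop i a) ds * H ds)"
      by (simp only: Tr_Cons_coef sum_distrib_right)
    also have "\<dots> = (\<Sum>i\<le>length a. \<Sum>ds\<in>comps (n - p). coef a i p * Tr (drop i a) ds * H ds)"
      by (rule sum.swap)
    also have "\<dots> = (\<Sum>i\<le>length a. coef a i p * (\<Sum>ds\<in>comps (sum_list (drop i a)). Tr (drop i a) ds * H ds))"
    proof (intro sum.cong refl)
      fix i
      show "(\<Sum>ds\<in>comps (n - p). coef a i p * Tr (drop i a) ds * H ds) =
            coef a i p * (\<Sum>ds\<in>comps (sum_list (drop i a)). Tr (drop i a) ds * H ds)"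
      proof (cases "sum_list (take i a) = p")
        case True
        then have "sum_list (drop i a) = n - p" using sum_take_drop[of i a] by (simp add: n_def)
        then show ?thesis by (simp add: sum_distrib_left mult.assoc)
      qed (simp add: coef_def)
    qed
    finally show ?thesis using True by simp
  next
    case False
    then have "(coef a i p :: 'k) = 0" for i
      using sum_take_le[of i a] by (auto simp: coef_def n_def)
    then show ?thesis using False by simp
  qed
  finally show ?thesis by (simp add: n_def)
qed



lemma coef_0: "0 < p \<Longrightarrow> (coef a 0 p :: 'k::field) = 0"
  by (simp add: coef_def)

lemma coef_identity:
  assumes "is_comp a" "is_comp b" "0 < x" "i \<le> length a" "j \<le> length b"
  shows "(if sum_list (take i a) + sum_list (take j b) = x then nu (take i a) * nu (take j b) else 0) =
    (if i = 0 then coef b j x else 0) + (if j = 0 then coef a i x else 0) +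
    (\<Sum>p\<in>{1..<x}. coef a i p * (coef b j (x - p) :: 'k::field))"
proof (cases "i = 0")
  case True
  then show ?thesis using assms by (auto simp: coef_def)
next
  case False
  note i = False
  show ?thesis
  proof (cases "j = 0")
    case True
    then show ?thesis using assms i by (auto simp: coef_def)
  next
    case False
    have si: "0 < sum_list (take i a)" using sum_take_pos assms i by blast
    have sj: "0 < sum_list (take j b)" using sum_take_pos assms False by blast
    have "(\<Sum>p\<in>{1..<x}. coef a i p * (coef b j (x - p) :: 'k)) =
          (\<Sum>p\<in>{1..<x}. if p = sum_list (take i a) then nu (take i a) * coef b j (x - sum_list (take i a)) else 0)"
      by (intro sum.cong refl) (auto simp: coef_def)
    also have "\<dots> = (if sum_list (take i a) \<in> {1..<x} then nu (take i a) * coef b j (x - sum_list (take i a)) else 0)"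
      by (simp add: sum.delta')
    also have "\<dots> = (if sum_list (take i a) + sum_list (take j b) = x then nu (take i a) * nu (take j b) else 0)"
      using si sj by (auto simp: coef_def)
    finally show ?thesis using i False by simp
  qed
qed

lemma Rhs_rec:
  assumes "is_comp a" "is_comp b" "a \<noteq> []" "b \<noteq> []" "0 < x"
  shows "(Rhs a b (x # cs) :: 'k::field) = (\<Sum>i\<le>length a. \<Sum>j\<le>length b.
    (if sum_list (take i a) + sum_list (take j b) = x then nu (take i a) * nu (take j b) else 0) *
    Rhs (drop i a) (drop j b) cs)"
proof -
  define na where "na = sum_list a"
  define nb where "nb = sum_list b"
  have na: "0 < na" using assms comp_sum_eq0 unfolding na_def by (metis gr0I)
  have nb: "0 < nb" using assms comp_sum_eq0 unfolding nb_def by (metis gr0I)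
  define K where "K d e = (of_nat (count_list (qsh d e) cs) :: 'k)" for d e
  have split: "Tr a d * Tr b e * (of_nat (count_list (qsh d e) (x#cs)) :: 'k) =
     (if hd d = x then Tr a d * Tr b e * K (tl d) e else 0) + (if hd e = x then Tr a d * Tr b e * K d (tl e) else 0)
     + (if hd d + hd e = x then Tr a d * Tr b e * K (tl d) (tl e) else 0)" if dn: "d \<noteq> []" and en: "e \<noteq> []" for d e
  proof -
    obtain p ds where d: "d = p # ds" using dn by (cases d) auto
    obtain q es where e: "e = q # es" using en by (cases e) auto
    have cnt: "(of_nat (count_list (qsh d e) (x#cs)) :: 'k) = (if hd d = x then K (tl d) e else 0) + (if hd e = x then K d (tl e) else 0) + (if hd d + hd e = x then K (tl d) (tl e) else 0)"
      unfolding d e count_qsh_Cons K_def by simp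
    show ?thesis by (simp only: cnt) (simp add: distrib_left)
  qed
  define T1 where "T1 = (\<Sum>e\<in>comps nb. Tr b e * (\<Sum>d\<in>comps na. if hd d = x then Tr a d * K (tl d) e else 0))"
  define T2 where "T2 = (\<Sum>d\<in>comps na. Tr a d * (\<Sum>e\<in>comps nb. if hd e = x then Tr b e * K d (tl e) else 0))"
  define T3 where "T3 = (\<Sum>d\<in>comps na. \<Sum>e\<in>comps nb. if hd d + hd e = x then Tr a d * Tr b e * K (tl d) (tl e) else 0)"
  have R: "(Rhs a b (x # cs) :: 'k) = T1 + T2 + T3"
  proof -
    have "(Rhs a b (x # cs) :: 'k) = (\<Sum>d\<in>comps na. \<Sum>e\<in>comps nb.
       (if hd d = x then Tr a d * Tr b e * K (tl d) e else 0) + (if hd e = x then Tr a d * Tr b e * K d (tl e) else 0)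
     + (if hd d + hd e = x then Tr a d * Tr b e * K (tl d) (tl e) else 0))"
      unfolding Rhs_def na_def[symmetric] nb_def[symmetric]
      using na nb by (intro sum.cong refl split) auto
    also have "\<dots> = (\<Sum>d\<in>comps na. \<Sum>e\<in>comps nb. if hd d = x then Tr a d * Tr b e * K (tl d) e else 0)
       + (\<Sum>d\<in>comps na. \<Sum>e\<in>comps nb. if hd e = x then Tr a d * Tr b e * K d (tl e) else 0) + T3"
      unfolding T3_def by (simp add: sum.distrib)
    also have "(\<Sum>d\<in>comps na. \<Sum>e\<in>comps nb. if hd d = x then Tr a d * Tr b e * K (tl d) e else 0) = T1"
      unfolding T1_def
      by (subst sum.swap) (auto simp: sum_distrib_left intro!: sum.cong)
    also have "(\<Sum>d\<in>comps na. \<Sum>e\<in>comps nb. if hd e = x then Tr a d * Tr b e * K d (tl e) else 0) = T2"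
      unfolding T2_def
      by (auto simp: sum_distrib_left intro!: sum.cong)
    finally show ?thesis .
  qed
  have T1': "T1 = (\<Sum>i\<le>length a. coef a i x * Rhs (drop i a) b cs)"
  proof -
    have "T1 = (\<Sum>e\<in>comps nb. Tr b e * (\<Sum>i\<le>length a. coef a i x *
                 (\<Sum>ds\<in>comps (sum_list (drop i a)). Tr (drop i a) ds * K ds e)))"
      unfolding T1_def na_def using sum_comps_hd[OF assms(1) assms(5), of "\<lambda>ds. K ds _"] na
      by (simp add: na_def)
    also have "\<dots> = (\<Sum>i\<le>length a. coef a i x * (\<Sum>ds\<in>comps (sum_list (drop i a)). \<Sum>e\<in>comps nb.
                 Tr (drop i a) ds * Tr b e * K ds e))"
      by (subst sum.swap) (simp add: sum_distrib_left sum_distrib_right mult_ac sum.swap[of _ "comps nb"])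
    also have "\<dots> = (\<Sum>i\<le>length a. coef a i x * Rhs (drop i a) b cs)"
      by (simp add: Rhs_def K_def nb_def)
    finally show ?thesis .
  qed
  have T2': "T2 = (\<Sum>j\<le>length b. coef b j x * Rhs a (drop j b) cs)"
  proof -
    have "T2 = (\<Sum>d\<in>comps na. Tr a d * (\<Sum>j\<le>length b. coef b j x *
                 (\<Sum>es\<in>comps (sum_list (drop j b)). Tr (drop j b) es * K d es)))"
      unfolding T2_def nb_def using sum_comps_hd[OF assms(2) assms(5), of "\<lambda>es. K _ es"] nb
      by (simp add: nb_def)
    also have "\<dots> = (\<Sum>d\<in>comps na. \<Sum>j\<le>length b. coef b j x * (\<Sum>es\<in>comps (sum_list (drop j b)).
                 Tr a d * Tr (drop j b) es * K d es))"
      by (intro sum.cong refl) (simp add: sum_distrib_left mult_ac)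
    also have "\<dots> = (\<Sum>j\<le>length b. \<Sum>d\<in>comps na. coef b j x * (\<Sum>es\<in>comps (sum_list (drop j b)).
                 Tr a d * Tr (drop j b) es * K d es))"
      by (rule sum.swap)
    also have "\<dots> = (\<Sum>j\<le>length b. coef b j x * (\<Sum>d\<in>comps na. \<Sum>es\<in>comps (sum_list (drop j b)).
                 Tr a d * Tr (drop j b) es * K d es))"
      by (simp add: sum_distrib_left)
    also have "\<dots> = (\<Sum>j\<le>length b. coef b j x * Rhs a (drop j b) cs)"
      by (simp add: Rhs_def K_def na_def)
    finally show ?thesis .
  qed
  have T3': "T3 = (\<Sum>i\<le>length a. \<Sum>j\<le>length b.
      (\<Sum>p\<in>{1..<x}. coef a i p * coef b j (x - p)) * Rhs (drop i a) (drop j b) cs)"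
  proof -
    define H where "H p ds = (\<Sum>j\<le>length b. coef b j (x - p) *
        (\<Sum>es\<in>comps (sum_list (drop j b)). Tr (drop j b) es * K ds es))" for p ds
    define F where "F d e p = (if hd d = p then Tr a d * (if hd e = x - p then Tr b e * K (tl d) (tl e) else 0) else 0)" for d e p
    have a: "(if hd d + hd e = x then Tr a d * Tr b e * K (tl d) (tl e) else 0) = (\<Sum>p\<in>{1..<x}. F d e p)"
      if "d \<in> comps na" "e \<in> comps nb" for d e
    proof -
      have "d \<noteq> []" "e \<noteq> []" using that na nb by auto
      then have "0 < hd d" "0 < hd e" using that by (auto simp: is_comp_def)
      have "(\<Sum>p\<in>{1..<x}. F d e p) = (\<Sum>p\<in>{1..<x}. if p = hd d then Tr a d * (if hd e = x - hd d then Tr b e * K (tl d) (tl e) else 0) else 0)"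
        unfolding F_def by (intro sum.cong refl) auto
      also have "\<dots> = (if hd d \<in> {1..<x} then Tr a d * (if hd e = x - hd d then Tr b e * K (tl d) (tl e) else 0) else 0)"
        by (simp add: sum.delta')
      also have "\<dots> = (if hd d + hd e = x then Tr a d * Tr b e * K (tl d) (tl e) else 0)"
        using \<open>0 < hd d\<close> \<open>0 < hd e\<close> by auto
      finally show ?thesis by simp
    qed
    have "T3 = (\<Sum>d\<in>comps na. \<Sum>e\<in>comps nb. \<Sum>p\<in>{1..<x}. F d e p)"
      unfolding T3_def by (intro sum.cong refl a)
    also have "\<dots> = (\<Sum>d\<in>comps na. \<Sum>p\<in>{1..<x}. \<Sum>e\<in>comps nb. F d e p)"
      by (rule sum.cong[OF refl]) (rule sum.swap)
    also have "\<dots> = (\<Sum>p\<in>{1..<x}. \<Sum>d\<in>comps na. \<Sum>e\<in>comps nb. F d e p)"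
      by (rule sum.swap)
    also have "\<dots> = (\<Sum>p\<in>{1..<x}. \<Sum>d\<in>comps na. if hd d = p then Tr a d * H p (tl d) else 0)"
    proof (intro sum.cong refl)
      fix p d assume p: "p \<in> {1..<x}"
      have "(\<Sum>e\<in>comps nb. F d e p) = (if hd d = p then Tr a d * (\<Sum>e\<in>comps nb. if hd e = x - p then Tr b e * K (tl d) (tl e) else 0) else 0)"
        unfolding F_def by (simp add: sum_distrib_left)
      also have "(\<Sum>e\<in>comps nb. if hd e = x - p then Tr b e * K (tl d) (tl e) else 0) = H p (tl d)"
        unfolding H_def nb_def using p nb by (intro sum_comps_hd assms(2)) (auto simp: nb_def)
      finally show "(\<Sum>e\<in>comps nb. F d e p) = (if hd d = p then Tr a d * H p (tl d) else 0)" .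
    qed
    also have "\<dots> = (\<Sum>p\<in>{1..<x}. \<Sum>i\<le>length a. coef a i p *
        (\<Sum>ds\<in>comps (sum_list (drop i a)). Tr (drop i a) ds * H p ds))"
      unfolding na_def using na by (intro sum.cong refl sum_comps_hd assms(1)) (auto simp: na_def)
    also have "\<dots> = (\<Sum>p\<in>{1..<x}. \<Sum>i\<le>length a. \<Sum>j\<le>length b. coef a i p * coef b j (x - p) * Rhs (drop i a) (drop j b) cs)"
    proof (intro sum.cong refl)
      fix p i
      have "(\<Sum>ds\<in>comps (sum_list (drop i a)). Tr (drop i a) ds * H p ds) =
        (\<Sum>ds\<in>comps (sum_list (drop i a)). \<Sum>j\<le>length b. coef b j (x - p) *
           (\<Sum>es\<in>comps (sum_list (drop j b)). Tr (drop i a) ds * Tr (drop j b) es * K ds es))"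
        unfolding H_def by (intro sum.cong refl) (simp add: sum_distrib_left mult_ac)
      also have "\<dots> = (\<Sum>j\<le>length b. \<Sum>ds\<in>comps (sum_list (drop i a)). coef b j (x - p) *
           (\<Sum>es\<in>comps (sum_list (drop j b)). Tr (drop i a) ds * Tr (drop j b) es * K ds es))"
        by (rule sum.swap)
      also have "\<dots> = (\<Sum>j\<le>length b. coef b j (x - p) * Rhs (drop i a) (drop j b) cs)"
        by (simp add: sum_distrib_left Rhs_def K_def)
      finally show "coef a i p * (\<Sum>ds\<in>comps (sum_list (drop i a)). Tr (drop i a) ds * H p ds) =
          (\<Sum>j\<le>length b. coef a i p * coef b j (x - p) * Rhs (drop i a) (drop j b) cs)"
        by (simp add: sum_distrib_left mult_ac)
    qed
    also have "\<dots> = (\<Sum>i\<le>length a. \<Sum>p\<in>{1..<x}. \<Sum>j\<le>length b. coef a i p * coef b j (x - p) * Rhs (drop i a) (drop j b) cs)"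
      by (rule sum.swap)
    also have "\<dots> = (\<Sum>i\<le>length a. \<Sum>j\<le>length b. \<Sum>p\<in>{1..<x}. coef a i p * coef b j (x - p) * Rhs (drop i a) (drop j b) cs)"
      by (rule sum.cong[OF refl]) (rule sum.swap)
    also have "\<dots> = (\<Sum>i\<le>length a. \<Sum>j\<le>length b.
      (\<Sum>p\<in>{1..<x}. coef a i p * coef b j (x - p)) * Rhs (drop i a) (drop j b) cs)"
      by (simp add: sum_distrib_right)
    finally show ?thesis .
  qed
  define C where "C i j = (if sum_list (take i a) + sum_list (take j b) = x then nu (take i a) * nu (take j b) else (0::'k))" for i j
  define RR where "RR i j = (Rhs (drop i a) (drop j b) cs :: 'k)" for i j
  define D where "D i j = (\<Sum>p\<in>{1..<x}. coef a i p * (coef b j (x - p) :: 'k))" for i j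
  have "(\<Sum>i\<le>length a. \<Sum>j\<le>length b. C i j * RR i j) =
    (\<Sum>i\<le>length a. \<Sum>j\<le>length b. (if i = 0 then coef b j x else 0) * RR i j +
        (if j = 0 then coef a i x else 0) * RR i j + D i j * RR i j)"
    unfolding C_def D_def using assms
    by (intro sum.cong refl) (simp add: coef_identity distrib_right del: One_nat_def)
  also have "\<dots> = (\<Sum>i\<le>length a. \<Sum>j\<le>length b. (if i = 0 then coef b j x else 0) * RR i j) +
      (\<Sum>i\<le>length a. \<Sum>j\<le>length b. (if j = 0 then coef a i x else 0) * RR i j) +
      (\<Sum>i\<le>length a. \<Sum>j\<le>length b. D i j * RR i j)"
    by (simp add: sum.distrib)
  also have "(\<Sum>i\<le>length a. \<Sum>j\<le>length b. (if i = 0 then coef b j x else 0) * RR i j) =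
      (\<Sum>i\<le>length a. if i = 0 then (\<Sum>j\<le>length b. coef b j x * RR i j) else 0)"
    by (intro sum.cong refl) auto
  also have "\<dots> = T2" unfolding T2' RR_def by (simp add: sum.delta)
  also have "(\<Sum>i\<le>length a. \<Sum>j\<le>length b. (if j = 0 then coef a i x else 0) * RR i j) =
      (\<Sum>i\<le>length a. coef a i x * RR i 0)"
  proof (intro sum.cong refl)
    fix i
    have "(\<Sum>j\<le>length b. (if j = 0 then coef a i x else 0) * RR i j) = (\<Sum>j\<le>length b. if j = 0 then coef a i x * RR i j else 0)"
      by (intro sum.cong) auto
    then show "(\<Sum>j\<le>length b. (if j = 0 then coef a i x else 0) * RR i j) = coef a i x * RR i 0"
      by (simp add: sum.delta)
  qed
  also have "\<dots> = T1" unfolding T1' RR_def by simp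
  also have "(\<Sum>i\<le>length a. \<Sum>j\<le>length b. D i j * RR i j) = T3" unfolding T3' D_def RR_def ..
  finally show ?thesis unfolding C_def RR_def R by (simp add: add_ac)
qed



lemma Lhs_Rhs: "is_comp a \<Longrightarrow> is_comp b \<Longrightarrow> is_comp c \<Longrightarrow> (Lhs a b c :: 'k::field) = Rhs a b c"
proof (induction c arbitrary: a b)
  case Nil
  show ?case
  proof (cases "a = []")
    case True then show ?thesis using Nil by (simp add: Lhs_Nil1 Rhs_Nil1)
  next
    case False
    show ?thesis
    proof (cases "b = []")
      case True then show ?thesis using Nil by (simp add: Lhs_Nil2 Rhs_Nil2)
    next
      case False
      then show ?thesis using \<open>a \<noteq> []\<close> Nil by (simp add: Lhs_Nil Rhs_Nil_nonempty)
    qed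
  qed
next
  case (Cons x cs)
  show ?case
  proof (cases "a = [] \<or> b = []")
    case True then show ?thesis using Cons.prems by (auto simp: Lhs_Nil1 Rhs_Nil1 Lhs_Nil2 Rhs_Nil2)
  next
    case False
    have x: "0 < x" "is_comp cs" using Cons.prems by auto
    have "(Lhs a b (x # cs) :: 'k) = (\<Sum>i\<le>length a. \<Sum>j\<le>length b.
      (if sum_list (take i a) + sum_list (take j b) = x then nu (take i a) * nu (take j b) else 0) *
      Lhs (drop i a) (drop j b) cs)" by (rule Lhs_rec)
    also have "\<dots> = (\<Sum>i\<le>length a. \<Sum>j\<le>length b.
      (if sum_list (take i a) + sum_list (take j b) = x then nu (take i a) * nu (take j b) else 0) *
      Rhs (drop i a) (drop j b) cs)"
      using Cons.IH Cons.prems x by (intro sum.cong refl) auto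
    also have "\<dots> = Rhs a b (x # cs)"
      using False Cons.prems x by (intro Rhs_rec[symmetric]) auto
    finally show ?thesis .
  qed
qed

lemma evalf_supp: "finite S \<Longrightarrow> {a. f a \<noteq> 0} \<subseteq> S \<Longrightarrow> evalf phi f = (\<Sum>a\<in>S. f a * phi a)"
  unfolding evalf_def by (rule sum.mono_neutral_left) auto

lemma TT_supp: "TT a c \<noteq> 0 \<Longrightarrow> is_comp c \<and> sum_list c = sum_list a"
  by (auto simp: TT_def split: if_splits dest: Tr_supp)

lemma Tr_zeta: "is_comp a \<Longrightarrow> (\<Sum>c\<in>comps (sum_list a). Tr a c * zeta0 c) = (nu a :: 'k::field)"
proof (cases "a = []")
  case True then show ?thesis by (simp add: comps_0)
next
  case False
  assume a: "is_comp a"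
  define n where "n = sum_list a"
  have n: "0 < n" using a False comp_sum_eq0 unfolding n_def by (metis gr0I)
  have "(\<Sum>c\<in>comps n. Tr a c * zeta0 c) = (\<Sum>c\<in>{[n]}. Tr a c * (zeta0 c :: 'k))"
  proof (rule sum.mono_neutral_right)
    show "finite (comps n)" by (rule finite_comps)
    show "{[n]} \<subseteq> comps n" using n by auto
    show "\<forall>c\<in>comps n - {[n]}. Tr a c * (zeta0 c :: 'k) = 0"
    proof
      fix c assume c: "c \<in> comps n - {[n]}"
      have "2 \<le> length c"
      proof (rule ccontr)
        assume "\<not> 2 \<le> length c"
        then have "length c = 0 \<or> length c = 1" by linarith
        then show False using c n by (auto simp: length_Suc_conv)
      qed
      then show "Tr a c * (zeta0 c :: 'k) = 0" by (simp add: zeta0_def)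
    qed
  qed
  also have "\<dots> = nu a" by (simp add: Tr_single n_def zeta0_def del: Tr.simps(2))
  finally show ?thesis by (simp add: n_def)
qed

lemma TT_evalf: "is_comp a \<Longrightarrow> evalf zetaQ (TT a) = (nu a :: 'k::field)"
proof -
  assume a: "is_comp a"
  have "evalf zetaQ (TT a) = (\<Sum>c\<in>comps (sum_list a). TT a c * (zetaQ c :: 'k))"
    by (rule evalf_supp) (auto simp: finite_comps dest: TT_supp)
  also have "\<dots> = (\<Sum>c\<in>comps (sum_list a). Tr a c * zeta0 c)"
    using a by (intro sum.cong refl) (auto simp: TT_def zetaQ_comp)
  finally show ?thesis using Tr_zeta a by simp
qed

lemma is_Theta_TT: "is_Theta (TT :: nat list \<Rightarrow> nat list \<Rightarrow> 'k::field)"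
  unfolding is_Theta_def
proof (intro conjI allI impI)
  fix a :: "nat list" assume "\<not> is_comp a"
  then show "TT a = (\<lambda>_. 0 :: 'k)" by (auto simp: TT_def)
next
  fix a b assume "(TT a b :: 'k) \<noteq> 0"
  then show "is_comp b" using TT_supp by blast
next
  fix a b assume "(TT a b :: 'k) \<noteq> 0"
  then show "sum_list b = sum_list a" using TT_supp by blast
next
  show "(TT [] :: nat list \<Rightarrow> 'k) = Mon []"
  proof
    fix c show "(TT [] c :: 'k) = Mon [] c"
    proof (cases "is_comp c")
      case False
      then have "c \<noteq> []" by auto
      then show ?thesis using False by (simp add: TT_def Mon_def)
    qed (simp add: TT_def Mon_def Tr_Nil_left)
  qed
next
  fix a b c :: "nat list" assume abc: "is_comp a" "is_comp b" "is_comp c"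
  have "sum_list (map (\<lambda>d. TT d c) (qsh a b)) = (Lhs a b c :: 'k)"
    unfolding Lhs_def by (intro sum_list_cong_set) (simp add: TT_def qsh_comp[OF abc(1,2)] abc(3))
  also have "\<dots> = Rhs a b c" using abc by (rule Lhs_Rhs)
  also have "\<dots> = (\<Sum>d\<in>comps (sum_list a). \<Sum>e\<in>comps (sum_list b).
            TT a d * TT b e * of_nat (count_list (qsh d e) c))"
    unfolding Rhs_def by (intro sum.cong refl) (simp add: TT_def abc)
  finally show "sum_list (map (\<lambda>d. TT d c) (qsh a b)) = (\<Sum>d\<in>comps (sum_list a). \<Sum>e\<in>comps (sum_list b).
            TT a d * TT b e * of_nat (count_list (qsh d e) c) :: 'k)" .
next
  fix a b c :: "nat list" assume abc: "is_comp a" "is_comp b" "is_comp c"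
  then show "(TT a (b @ c) :: 'k) = (\<Sum>i\<le>length a. TT (take i a) b * TT (drop i a) c)"
    unfolding TT_def using abc by (simp add: Tr_append)
next
  fix a :: "nat list" assume "is_comp a"
  then show "evalf zetaQ (TT a) = (conv (conv_inv (bar zetaQ)) zetaQ a :: 'k)"
    by (simp add: TT_evalf nu_conv)
qed

lemma Theta_unique:
  assumes T: "is_Theta (T :: nat list \<Rightarrow> nat list \<Rightarrow> 'k::field)"
  shows "T = TT"
proof -
  have nc: "\<And>a. \<not> is_comp a \<Longrightarrow> T a = (\<lambda>_. 0)" and supp: "\<And>a b. T a b \<noteq> 0 \<Longrightarrow> is_comp b \<and> sum_list b = sum_list a"
    and T0: "T [] = Mon []"
    and co: "\<And>a b c. is_comp a \<Longrightarrow> is_comp b \<Longrightarrow> is_comp c \<Longrightarrow> T a (b @ c) = (\<Sum>i\<le>length a. T (take i a) b * T (drop i a) c)"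
    and ch: "\<And>a. is_comp a \<Longrightarrow> evalf zetaQ (T a) = conv (conv_inv (bar zetaQ)) zetaQ a"
    using T unfolding is_Theta_def by blast+
  have single: "T a [x] = (if sum_list a = x then nu a else 0)" if a: "is_comp a" and x: "0 < x" for a x
  proof (cases "a = []")
    case True then show ?thesis using x T0 by (simp add: Mon_def)
  next
    case False
    define n where "n = sum_list a"
    have n: "0 < n" using a False comp_sum_eq0 unfolding n_def by (metis gr0I)
    have "(nu a :: 'k) = evalf zetaQ (T a)" using ch[OF a] by (simp add: nu_conv[OF a])
    also have "\<dots> = (\<Sum>c\<in>comps n. T a c * zetaQ c)"
      by (rule evalf_supp) (auto simp: finite_comps n_def dest: supp)
    also have "\<dots> = (\<Sum>c\<in>{[n]}. T a c * zetaQ c)"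
    proof (rule sum.mono_neutral_right)
      show "finite (comps n)" by (rule finite_comps)
      show "{[n]} \<subseteq> comps n" using n by auto
      show "\<forall>c\<in>comps n - {[n]}. T a c * zetaQ c = 0"
      proof
        fix c assume c: "c \<in> comps n - {[n]}"
        have "2 \<le> length c"
        proof (rule ccontr)
          assume "\<not> 2 \<le> length c"
          then have "length c = 0 \<or> length c = 1" by linarith
          then show False using c n by (auto simp: length_Suc_conv)
        qed
        then show "T a c * zetaQ c = 0" by (simp add: zetaQ_def)
      qed
    qed
    also have "\<dots> = T a [n]" using n by (simp add: zetaQ_def)
    finally have "T a [n] = nu a" by simp
    moreover have "T a [x] = 0" if "x \<noteq> n" using supp[of a "[x]"] that by (auto simp: n_def)
    ultimately show ?thesis by (auto simp: n_def)
  qed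
  have main: "T a c = Tr a c" if "is_comp a" "is_comp c" for a c
    using that
  proof (induction c arbitrary: a)
    case Nil
    show ?case
    proof (cases "a = []")
      case True then show ?thesis using T0 by (simp add: Mon_def)
    next
      case False
      then have "T a [] = 0" using supp[of a "[]"] Nil comp_sum_eq0 by fastforce
      then show ?thesis using False by simp
    qed
  next
    case (Cons x cs)
    have x: "0 < x" "is_comp cs" using Cons.prems by auto
    have "T a (x # cs) = T a ([x] @ cs)" by simp
    also have "\<dots> = (\<Sum>i\<le>length a. T (take i a) [x] * T (drop i a) cs)"
      using Cons.prems x by (intro co) auto
    also have "\<dots> = Tr a (x # cs)"
      using Cons.prems x Cons.IH by (simp add: single)
    finally show ?case .
  qed
  show ?thesis
  proof (intro ext)
    fix a c
    show "T a c = TT a c"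
    proof (cases "is_comp a")
      case False then show ?thesis using nc by (simp add: TT_def)
    next
      case True
      show ?thesis
      proof (cases "is_comp c")
        case False then show ?thesis using supp[of a c] by (auto simp: TT_def)
      qed (use True main in \<open>simp add: TT_def\<close>)
    qed
  qed
qed

lemma Theta_mat_eq: "Theta_mat = (TT :: nat list \<Rightarrow> nat list \<Rightarrow> 'k::field)"
  unfolding Theta_mat_def using is_Theta_TT Theta_unique by (rule the_equality)



definition Gs :: "nat list \<Rightarrow> 'k::field" where
  "Gs a = (\<Sum>c\<in>comps (sum_list a). Tr a c * (-1) ^ length c)"

definition Ss :: "nat list \<Rightarrow> 'k::field" where
  "Ss a = (\<Sum>i\<le>length a. if i = 0 then 0 else nu (take i a) * Gs (drop i a))"

lemma Gs_Nil[simp]: "Gs [] = 1" by (simp add: Gs_def comps_0)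

lemma Gs_rec:
  assumes a: "is_comp a" "a \<noteq> []"
  shows "(Gs a :: 'k::field) = - Ss a"
proof -
  define n where "n = sum_list a"
  have n: "0 < n" using a comp_sum_eq0 unfolding n_def by (metis gr0I)
  define H where "H ds = (- ((-1) ^ length ds) :: 'k)" for ds :: "nat list"
  have "(Gs a :: 'k) = (\<Sum>d\<in>comps n. \<Sum>p\<in>{1..n}. if hd d = p then Tr a d * H (tl d) else 0)"
    unfolding Gs_def n_def[symmetric]
  proof (intro sum.cong refl)
    fix d assume d: "d \<in> comps n"
    then have "d \<noteq> []" using n by auto
    then have hdin: "hd d \<in> set d" by simp
    have "0 < hd d" using d hdin by (auto simp: is_comp_def)
    moreover have "hd d \<le> n" using d hdin comp_elem_le_sum by auto
    ultimately have hd: "hd d \<in> {1..n}" by auto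
    have "(\<Sum>p\<in>{1..n}. if hd d = p then Tr a d * H (tl d) else 0) = Tr a d * H (tl d)"
      using hd by (simp add: sum.delta)
    also have "\<dots> = Tr a d * (-1) ^ length d" using \<open>d \<noteq> []\<close> by (cases d) (auto simp: H_def)
    finally show "Tr a d * (-1) ^ length d = (\<Sum>p\<in>{1..n}. if hd d = p then Tr a d * H (tl d) else 0)" by simp
  qed
  also have "\<dots> = (\<Sum>p\<in>{1..n}. \<Sum>d\<in>comps n. if hd d = p then Tr a d * H (tl d) else 0)"
    by (rule sum.swap)
  also have "\<dots> = (\<Sum>p\<in>{1..n}. \<Sum>i\<le>length a. coef a i p * (\<Sum>ds\<in>comps (sum_list (drop i a)). Tr (drop i a) ds * H ds))"
    unfolding n_def using n by (intro sum.cong refl sum_comps_hd a(1)) (auto simp: n_def)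
  also have "\<dots> = (\<Sum>p\<in>{1..n}. \<Sum>i\<le>length a. - (coef a i p * Gs (drop i a)))"
    by (simp add: H_def Gs_def sum_negf)
  also have "\<dots> = - (\<Sum>i\<le>length a. (\<Sum>p\<in>{1..n}. coef a i p) * Gs (drop i a))"
    by (subst sum.swap) (simp add: sum_negf sum_distrib_right)
  also have "\<dots> = - Ss a"
    unfolding Ss_def
  proof (intro arg_cong[where f=uminus] sum.cong refl)
    fix i assume i: "i \<in> {..length a}"
    have "(\<Sum>p\<in>{1..n}. coef a i p :: 'k) = (\<Sum>p\<in>{1..n}. if p = sum_list (take i a) then nu (take i a) else 0)"
      by (intro sum.cong refl) (auto simp: coef_def)
    also have "\<dots> = (if sum_list (take i a) \<in> {1..n} then nu (take i a) else 0)"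
      by (simp add: sum.delta')
    also have "\<dots> = (if i = 0 then 0 else nu (take i a))"
      using sum_take_pos[OF a(1), of i] i sum_take_le[of i a] by (auto simp: n_def)
    finally have c: "(\<Sum>p\<in>{1..n}. coef a i p :: 'k) = (if i = 0 then 0 else nu (take i a))" .
    show "(\<Sum>p\<in>{1..n}. coef a i p) * (Gs (drop i a) :: 'k) = (if i = 0 then 0 else nu (take i a) * Gs (drop i a))"
      unfolding c by simp
  qed
  finally show ?thesis .
qed

lemma sum_split_first: "(\<Sum>i\<le>(n::nat). f i) = f 0 + (\<Sum>i\<le>n. if i = 0 then 0 else f i)"
  by (induction n) (auto simp: add_ac)

lemma Gs_formula: "is_comp a \<Longrightarrow> (Gs a :: 'k::field) = (-1) ^ sum_list a * nu a"
proof (induction a)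
  case Nil then show ?case by simp
next
  case (Cons x r)
  have r: "is_comp r" using Cons.prems by simp
  have "(Ss (x # r) :: 'k) = (\<Sum>i\<le>length r. nu (x # take i r) * Gs (drop i r))"
    unfolding Ss_def by (simp add: sum.atMost_Suc_shift del: sum.atMost_Suc atMost_Suc)
  also have "\<dots> = (\<Sum>i\<le>length r. (if take i r = [] then Gs (drop i r) else 0)) - (-1) ^ x * (\<Sum>i\<le>length r. nu (take i r) * Gs (drop i r))"
  proof -
    have eq: "nu (x # take i r) * Gs (drop i r) = (if take i r = [] then Gs (drop i r) else 0) - (-1) ^ x * (nu (take i r) * (Gs (drop i r) :: 'k))" for i
      by (simp add: nu_Cons algebra_simps)
    show ?thesis by (simp only: eq sum_subtractf sum_distrib_left)
  qed
  also have "(\<Sum>i\<le>length r. (if take i r = [] then Gs (drop i r) else 0)) = (Gs r :: 'k)"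
    by (subst sum_atMost_first) auto
  also have "(\<Sum>i\<le>length r. nu (take i r) * Gs (drop i r)) = Gs r + (Ss r :: 'k)"
    unfolding Ss_def by (subst sum_split_first) (simp add: if_distrib cong: if_cong)
  finally have S: "(Ss (x # r) :: 'k) = Gs r - (-1) ^ x * (Gs r + Ss r)" .
  have "(Gs (x # r) :: 'k) = - Ss (x # r)" using Cons.prems by (intro Gs_rec) auto
  also have "\<dots> = (-1) ^ sum_list (x # r) * nu (x # r)"
  proof (cases "r = []")
    case True
    then show ?thesis unfolding S by (simp add: nu_Cons Ss_def algebra_simps power_add[symmetric])
  next
    case False
    have "Gs r = - (Ss r :: 'k)" using Gs_rec[OF r False] by simp
    then have "Ss (x # r) = (Gs r :: 'k)" unfolding S by simp
    then show ?thesis using Cons.IH[OF r] False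
      by (simp add: nu_Cons power_add algebra_simps power_mult_distrib[symmetric])
  qed
  finally show ?case .
qed



definition Lf :: "nat list \<Rightarrow> 'k::field" where
  "Lf c = bar zetaQ c - conv_inv zetaQ c"

lemma Lf_comp: "is_comp c \<Longrightarrow> (Lf c :: 'k::field) = (-1) ^ sum_list c * zeta0 c - (-1) ^ length c"
  by (simp add: Lf_def bar_def conv_inv_zetaQ zetaQ_comp)

lemma TT_L: "is_comp a \<Longrightarrow> (\<Sum>c\<in>comps n. TT a c * Lf c) = (0 :: 'k::field)"
proof (cases "n = sum_list a")
  case False
  then show ?thesis by (intro sum.neutral ballI) (auto dest: TT_supp)
next
  case True
  assume a: "is_comp a"
  have "(\<Sum>c\<in>comps n. TT a c * Lf c) = (\<Sum>c\<in>comps n. (-1) ^ n * (Tr a c * zeta0 c) - Tr a c * (-1) ^ length c :: 'k)"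
    using a by (intro sum.cong refl) (auto simp: TT_def Lf_comp algebra_simps)
  also have "\<dots> = (-1) ^ n * (\<Sum>c\<in>comps n. Tr a c * zeta0 c) - Gs a"
    by (simp add: sum_subtractf sum_distrib_left Gs_def True)
  also have "\<dots> = 0" using a by (simp add: Tr_zeta Gs_formula True)
  finally show ?thesis .
qed

lemma TT_append: "is_comp a \<Longrightarrow> is_comp b \<Longrightarrow> is_comp c \<Longrightarrow>
   (TT a (b @ c) :: 'k::field) = (\<Sum>i\<le>length a. TT (take i a) b * TT (drop i a) c)"
  unfolding TT_def by (simp add: Tr_append)

definition Rel :: "(nat list \<Rightarrow> 'k::field) \<Rightarrow> bool" where
  "Rel f \<longleftrightarrow> (\<forall>b d n. (\<Sum>c\<in>comps n. f (b @ c @ d) * Lf c) = 0)"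

lemma TT_Rel: "is_comp a \<Longrightarrow> Rel (TT a :: nat list \<Rightarrow> 'k::field)"
  unfolding Rel_def
proof (intro allI)
  fix b d :: "nat list" and n
  assume a: "is_comp a"
  show "(\<Sum>c\<in>comps n. TT a (b @ c @ d) * Lf c) = (0::'k)"
  proof (cases "is_comp b \<and> is_comp d")
    case False
    then show ?thesis by (intro sum.neutral ballI) (auto simp: TT_def)
  next
    case True
    have "(\<Sum>c\<in>comps n. TT a (b @ c @ d) * Lf c) =
      (\<Sum>c\<in>comps n. \<Sum>i\<le>length a. \<Sum>j\<le>length (drop i a).
         TT (take i a) b * TT (drop j (drop i a)) d * (TT (take j (drop i a)) c * (Lf c :: 'k)))"
      using True a by (intro sum.cong refl) (simp add: TT_append sum_distrib_left sum_distrib_right mult_ac)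
    also have "\<dots> = (\<Sum>i\<le>length a. \<Sum>j\<le>length (drop i a).
         TT (take i a) b * TT (drop j (drop i a)) d * (\<Sum>c\<in>comps n. TT (take j (drop i a)) c * Lf c))"
      by (subst sum.swap) (simp add: sum_distrib_left sum.swap[of _ "comps n"])
    also have "\<dots> = 0" using a by (simp add: TT_L)
    finally show ?thesis .
  qed
qed



definition Pset :: "nat list \<Rightarrow> nat set" where
  "Pset a = (\<lambda>j. sum_list (take j a)) ` {..length a}"

lemma Pset_Nil[simp]: "Pset [] = {0}" by (simp add: Pset_def)

lemma Pset_Cons: "Pset (x # xs) = insert 0 ((+) x ` Pset xs)"
proof -
  have "Pset (x # xs) = (\<lambda>j. sum_list (take j (x # xs))) ` ({0} \<union> Suc ` {..length xs})"
    unfolding Pset_def by (simp add: atMost_Suc_eq_insert_0)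
  also have "\<dots> = insert 0 ((+) x ` Pset xs)"
    unfolding Pset_def by (auto simp: image_image)
  finally show ?thesis .
qed

lemma zero_in_Pset[simp]: "0 \<in> Pset a"
  unfolding Pset_def by (rule image_eqI[where x=0]) auto

lemma Pset_append: "Pset (u @ v) = Pset u \<union> (+) (sum_list u) ` Pset v"
  by (induction u) (auto simp: Pset_Cons image_image add.assoc)

lemma sum_in_Pset[simp]: "sum_list a \<in> Pset a"
  unfolding Pset_def by (rule image_eqI[where x="length a"]) auto

lemma Pset_le: "s \<in> Pset a \<Longrightarrow> s \<le> sum_list a"
  unfolding Pset_def using sum_take_le by auto

lemma Pset_finite[simp]: "finite (Pset a)" by (simp add: Pset_def)

lemma sum_take_strict:
  assumes "is_comp a" "i < j" "j \<le> length a"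
  shows "sum_list (take i a) < sum_list (take j a)"
proof -
  have "take j a = take i a @ take (j - i) (drop i a)"
    using assms by (metis le_add_diff_inverse less_imp_le_nat take_add)
  moreover have "0 < sum_list (take (j - i) (drop i a))"
    using assms by (intro sum_take_pos) auto
  ultimately show ?thesis by simp
qed

lemma sum_take_inj:
  assumes "is_comp a" "i \<le> length a" "j \<le> length a" "sum_list (take i a) = sum_list (take j a)"
  shows "i = j"
  using sum_take_strict[OF assms(1), of i j] sum_take_strict[OF assms(1), of j i] assms
  by (cases i j rule: linorder_cases) auto

lemma card_Pset: "is_comp a \<Longrightarrow> card (Pset a) = Suc (length a)"
  unfolding Pset_def
  by (subst card_image) (auto simp: inj_on_def intro: sum_take_inj)

lemma Iset_Pset: "is_comp a \<Longrightarrow> Iset a = Pset a - {0, sum_list a}"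
proof (intro set_eqI iffI)
  fix s assume a: "is_comp a" and s: "s \<in> Iset a"
  then obtain j where j: "1 \<le> j" "j < length a" "s = sum_list (take j a)" by (auto simp: Iset_def)
  have "0 < s" using sum_take_pos[OF a, of j] j by auto
  moreover have "s < sum_list a" using sum_take_strict[OF a, of j "length a"] j by auto
  moreover have "s \<in> Pset a" unfolding Pset_def using j by (intro image_eqI[where x=j]) auto
  ultimately show "s \<in> Pset a - {0, sum_list a}" by auto
next
  fix s assume a: "is_comp a" and s: "s \<in> Pset a - {0, sum_list a}"
  then obtain j where j: "j \<le> length a" "s = sum_list (take j a)" by (auto simp: Pset_def)
  have "j \<noteq> 0"
  proof
    assume "j = 0" then have "s = 0" using j by simp
    then show False using s by simp
  qed
  moreover have "j \<noteq> length a"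
  proof
    assume "j = length a" then have "s = sum_list a" using j by simp
    then show False using s by simp
  qed
  ultimately show "s \<in> Iset a" using j by (auto simp: Iset_def)
qed

lemma comp_le_Pset: "comp_le a b \<longleftrightarrow> is_comp a \<and> is_comp b \<and> sum_list a = sum_list b \<and> Pset a \<subseteq> Pset b"
proof
  assume h: "comp_le a b"
  then have ab: "is_comp a" "is_comp b" "sum_list a = sum_list b" "Iset a \<subseteq> Iset b"
    by (auto simp: comp_le_def)
  then show "is_comp a \<and> is_comp b \<and> sum_list a = sum_list b \<and> Pset a \<subseteq> Pset b"
    using Iset_Pset[of a] Iset_Pset[of b] zero_in_Pset[of b] sum_in_Pset[of b] by auto
next
  assume h: "is_comp a \<and> is_comp b \<and> sum_list a = sum_list b \<and> Pset a \<subseteq> Pset b"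
  then show "comp_le a b"
    using Iset_Pset[of a] Iset_Pset[of b] by (auto simp: comp_le_def)
qed

lemma Pset_inj: "is_comp a \<Longrightarrow> is_comp b \<Longrightarrow> Pset a = Pset b \<Longrightarrow> a = b"
proof (induction a arbitrary: b)
  case Nil
  show ?case
  proof (cases b)
    case (Cons y ys)
    then have "y \<in> Pset b" by (simp add: Pset_Cons)
    then have "y \<in> {0}" using Nil.prems(3) by simp
    moreover have "0 < y" using Nil.prems(2) Cons by simp
    ultimately show ?thesis by simp
  qed simp
next
  case (Cons x xs)
  note IH = Cons.IH and prems = Cons.prems
  show ?case
  proof (cases b)
    case Nil
    have "x \<in> Pset (x # xs)" by (simp add: Pset_Cons)
    then have "x \<in> {0}" using Cons.prems(3) Nil by simp
    moreover have "0 < x" using Cons.prems(1) by simp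
    ultimately show ?thesis by simp
  next
    case (Cons y ys)
    note Cons2 = Cons
    have x: "0 < x" using prems(1) by simp
    have y: "0 < y" using prems(2) Cons2 by simp
    have r1: "Pset (x # xs) - {0} = (+) x ` Pset xs" using x unfolding Pset_Cons by auto
    have r2: "Pset b - {0} = (+) y ` Pset ys" using y unfolding Cons2 Pset_Cons by auto
    have eq: "(+) x ` Pset xs = (+) y ` Pset ys" using r1 r2 prems(3) by simp
    have "x \<in> (+) x ` Pset xs" by (rule image_eqI[where x=0]) auto
    then have "x \<in> (+) y ` Pset ys" using eq by simp
    then have "y \<le> x" by auto
    moreover have "y \<in> (+) y ` Pset ys" by (rule image_eqI[where x=0]) auto
    then have "y \<in> (+) x ` Pset xs" using eq by simp
    then have "x \<le> y" by auto
    ultimately have xy: "x = y" by simp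
    have inj: "inj ((+) x)" by (simp add: inj_def)
    have "Pset xs = Pset ys" using eq unfolding xy[symmetric] by (simp add: inj_image_eq_iff[OF inj])
    then have "xs = ys" using IH prems Cons2 by simp
    then show ?thesis using xy Cons2 by simp
  qed
qed

lemma comp_le_length: "comp_le a b \<Longrightarrow> length a \<le> length b"
  using card_mono[of "Pset b" "Pset a"] card_Pset[of a] card_Pset[of b]
  by (auto simp: comp_le_Pset)

lemma comp_le_length_eq: "comp_le a b \<Longrightarrow> length a = length b \<Longrightarrow> a = b"
proof -
  assume h: "comp_le a b" "length a = length b"
  then have "Pset a \<subseteq> Pset b" "card (Pset a) = card (Pset b)" "is_comp a" "is_comp b"
    using card_Pset[of a] card_Pset[of b] by (auto simp: comp_le_Pset)
  then have "Pset a = Pset b" by (intro card_subset_eq) auto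
  then show "a = b" using h by (intro Pset_inj) (auto simp: comp_le_Pset)
qed

lemma comp_le_Nil: "is_comp b \<Longrightarrow> comp_le [] b \<longleftrightarrow> b = []"
  using comp_sum_eq0[of b] by (auto simp: comp_le_Pset)

lemma comp_le_Cons:
  assumes "is_comp b" "is_comp (x # cs)"
  shows "comp_le (x # cs) b \<longleftrightarrow> (\<exists>i\<le>length b. sum_list (take i b) = x \<and> comp_le cs (drop i b))"
proof
  assume h: "comp_le (x # cs) b"
  then have P: "Pset (x # cs) \<subseteq> Pset b" and s: "x + sum_list cs = sum_list b" by (auto simp: comp_le_Pset)
  have "x \<in> Pset b" using P by (auto simp: Pset_Cons)
  then obtain i where i: "i \<le> length b" "sum_list (take i b) = x" by (auto simp: Pset_def)
  have split: "Pset b = Pset (take i b) \<union> (+) x ` Pset (drop i b)"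
    using Pset_append[of "take i b" "drop i b"] i by simp
  have "Pset cs \<subseteq> Pset (drop i b)"
  proof
    fix s assume "s \<in> Pset cs"
    then have "x + s \<in> Pset b" using P by (auto simp: Pset_Cons)
    then show "s \<in> Pset (drop i b)"
    proof (unfold split, elim UnE)
      assume "x + s \<in> Pset (take i b)"
      then have "x + s \<le> x" using Pset_le i by fastforce
      then show ?thesis by simp
    qed auto
  qed
  moreover have "sum_list cs = sum_list (drop i b)" using s i sum_take_drop[of i b] by simp
  ultimately have "comp_le cs (drop i b)" using assms by (auto simp: comp_le_Pset)
  then show "\<exists>i\<le>length b. sum_list (take i b) = x \<and> comp_le cs (drop i b)" using i by blast
next
  assume "\<exists>i\<le>length b. sum_list (take i b) = x \<and> comp_le cs (drop i b)"
  then obtain i where i: "i \<le> length b" "sum_list (take i b) = x" "comp_le cs (drop i b)" by blast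
  have split: "Pset b = Pset (take i b) \<union> (+) x ` Pset (drop i b)"
    using Pset_append[of "take i b" "drop i b"] i by simp
  have "Pset (x # cs) \<subseteq> Pset b" using i(3) unfolding split Pset_Cons by (auto simp: comp_le_Pset)
  moreover have "sum_list (x # cs) = sum_list b" using i sum_take_drop[of i b] by (auto simp: comp_le_Pset)
  ultimately show "comp_le (x # cs) b" using assms by (auto simp: comp_le_Pset)
qed

lemma odd_comp_take: "odd_comp b \<Longrightarrow> odd_comp (take i b)"
  by (auto simp: odd_comp_def dest: in_set_takeD)
lemma odd_comp_drop: "odd_comp b \<Longrightarrow> odd_comp (drop i b)"
  by (auto simp: odd_comp_def dest: in_set_dropD)

lemma Tr_odd:
  assumes "odd_comp b" "is_comp c"
  shows "(Tr b c :: 'k::field) = (if comp_le c b then 2 ^ length c else 0)"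
  using assms
proof (induction c arbitrary: b)
  case Nil
  then show ?case by (auto simp: comp_le_Nil odd_comp_def)
next
  case (Cons x cs)
  have b: "is_comp b" using Cons.prems by (simp add: odd_comp_def)
  have x: "0 < x" "is_comp cs" using Cons.prems by auto
  define P where "P i \<longleftrightarrow> sum_list (take i b) = x \<and> comp_le cs (drop i b)" for i
  have "(Tr b (x # cs) :: 'k) = (\<Sum>i\<le>length b. if P i then 2 ^ Suc (length cs) else 0)"
  proof (simp only: Tr.simps, intro sum.cong refl)
    fix i assume i: "i \<in> {..length b}"
    show "(if sum_list (take i b) = x then nu (take i b) else 0) * Tr (drop i b) cs =
          (if P i then 2 ^ Suc (length cs) else (0::'k))"
    proof (cases "sum_list (take i b) = x")
      case True
      have "take i b \<noteq> []"
      proof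
        assume e: "take i b = []" have "x = sum_list (take i b)" using True by simp
        then have "x = 0" unfolding e by simp
        with x show False by simp
      qed
      then have "nu (take i b) = (2::'k)"
        using odd_comp_take[OF Cons.prems(1), of i] by (intro nu_odd) (auto simp: odd_comp_def)
      then show ?thesis using True Cons.IH[OF odd_comp_drop[OF Cons.prems(1)] x(2)] by (simp add: P_def)
    qed (simp add: P_def)
  qed
  also have "\<dots> = (if comp_le (x # cs) b then 2 ^ length (x # cs) else 0)"
  proof (cases "comp_le (x # cs) b")
    case True
    then obtain i0 where i0: "i0 \<le> length b" "P i0" using comp_le_Cons[OF b Cons.prems(2)] by (auto simp: P_def)
    have "P i \<longleftrightarrow> i = i0" if "i \<le> length b" for i
      using sum_take_inj[OF b that i0(1)] i0 by (auto simp: P_def)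
    then have "(\<Sum>i\<le>length b. if P i then 2 ^ Suc (length cs) else (0::'k)) = (\<Sum>i\<le>length b. if i = i0 then 2 ^ Suc (length cs) else 0)"
      by (intro sum.cong refl) auto
    also have "\<dots> = 2 ^ Suc (length cs)" using i0 by (simp add: sum.delta)
    finally show ?thesis using True by simp
  next
    case False
    then have "\<not> P i" if "i \<le> length b" for i
      using comp_le_Cons[OF b Cons.prems(2)] that by (auto simp: P_def)
    then show ?thesis using False by (intro trans[OF sum.neutral]) auto
  qed
  finally show ?case .
qed

lemma TT_odd_eta: "odd_comp b \<Longrightarrow> (TT b :: nat list \<Rightarrow> 'k::field) = eta b"
proof
  fix c assume b: "odd_comp b"
  show "(TT b c :: 'k) = eta b c"
  proof (cases "is_comp c")
    case True
    then show ?thesis using b Tr_odd[OF b True] by (simp add: TT_def eta_def odd_comp_def)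
  next
    case False
    then show ?thesis by (simp add: TT_def eta_def comp_le_def)
  qed
qed



definition okc :: "(nat list \<Rightarrow> 'k::field) \<Rightarrow> bool" where
  "okc c \<longleftrightarrow> finite {b. c b \<noteq> 0} \<and> (\<forall>b. c b \<noteq> 0 \<longrightarrow> odd_comp b)"

definition lc :: "(nat list \<Rightarrow> 'k::field) \<Rightarrow> nat list \<Rightarrow> 'k" where
  "lc c = (\<lambda>a. \<Sum>b\<in>{b. c b \<noteq> 0}. c b * eta b a)"

definition EE :: "(nat list \<Rightarrow> 'k::field) set" where
  "EE = {f. \<exists>c. okc c \<and> f = lc c}"

lemma lc_superset: "finite S \<Longrightarrow> {b. c b \<noteq> 0} \<subseteq> S \<Longrightarrow> lc c a = (\<Sum>b\<in>S. c b * eta b a)"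
  unfolding lc_def by (rule sum.mono_neutral_left) auto

lemma eta_supp: "eta b a \<noteq> 0 \<Longrightarrow> comp_le a b"
  by (auto simp: eta_def split: if_splits)

lemma eta_self: "is_comp b \<Longrightarrow> eta b b = 2 ^ length b"
  by (simp add: eta_def comp_le_def)

lemma EE_zero: "(\<lambda>_. 0) \<in> EE"
  unfolding EE_def by (rule CollectI, rule exI[where x="\<lambda>_. 0"]) (auto simp: okc_def lc_def)

lemma EE_add:
  assumes "f \<in> EE" "g \<in> EE" shows "(\<lambda>a. f a + g a) \<in> EE"
proof -
  obtain c1 where c1: "okc c1" "f = lc c1" using assms(1) by (auto simp: EE_def)
  obtain c2 where c2: "okc c2" "g = lc c2" using assms(2) by (auto simp: EE_def)
  define S where "S = {b. c1 b \<noteq> 0} \<union> {b. c2 b \<noteq> 0}"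
  have S: "finite S" using c1 c2 by (auto simp: okc_def S_def)
  define c where "c b = c1 b + c2 b" for b
  have sub: "{b. c b \<noteq> 0} \<subseteq> S" by (auto simp: c_def S_def)
  have cc: "c b \<noteq> 0 \<Longrightarrow> c1 b \<noteq> 0 \<or> c2 b \<noteq> 0" for b by (auto simp: c_def)
  have "okc c" using c1 c2 sub S cc unfolding okc_def by (meson finite_subset)
  moreover have "(\<lambda>a. f a + g a) = lc c"
  proof
    fix a
    have "lc c a = (\<Sum>b\<in>S. c b * eta b a)" by (rule lc_superset[OF S sub])
    also have "\<dots> = (\<Sum>b\<in>S. c1 b * eta b a) + (\<Sum>b\<in>S. c2 b * eta b a)"
      by (simp add: c_def distrib_right sum.distrib)
    also have "\<dots> = f a + g a"
    proof -
      have "lc c1 a = (\<Sum>b\<in>S. c1 b * eta b a)" by (rule lc_superset[OF S]) (auto simp: S_def)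
      moreover have "lc c2 a = (\<Sum>b\<in>S. c2 b * eta b a)" by (rule lc_superset[OF S]) (auto simp: S_def)
      ultimately show ?thesis using c1 c2 by simp
    qed
    finally show "f a + g a = lc c a" by simp
  qed
  ultimately show ?thesis by (auto simp: EE_def)
qed

lemma EE_smult:
  assumes "f \<in> EE" shows "(\<lambda>a. k * f a) \<in> EE"
proof -
  obtain c1 where c1: "okc c1" "f = lc c1" using assms(1) by (auto simp: EE_def)
  define S where "S = {b. c1 b \<noteq> 0}"
  have S: "finite S" using c1 by (auto simp: okc_def S_def)
  define c where "c b = k * c1 b" for b
  have sub: "{b. c b \<noteq> 0} \<subseteq> S" by (auto simp: c_def S_def)
  have "okc c" using c1 sub S by (auto simp: okc_def c_def intro: finite_subset)
  moreover have "(\<lambda>a. k * f a) = lc c"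
  proof
    fix a
    have "lc c a = (\<Sum>b\<in>S. c b * eta b a)" by (rule lc_superset[OF S sub])
    also have "\<dots> = k * f a" using c1 S by (simp add: lc_superset S_def c_def sum_distrib_left mult.assoc)
    finally show "k * f a = lc c a" by simp
  qed
  ultimately show ?thesis by (auto simp: EE_def)
qed

lemma EE_diff: "f \<in> EE \<Longrightarrow> g \<in> EE \<Longrightarrow> (\<lambda>a. f a - g a) \<in> EE"
  using EE_add[of f "\<lambda>a. (-1) * g a"] EE_smult[of g "-1"] by simp

lemma EE_eta: "odd_comp b \<Longrightarrow> (eta b :: nat list \<Rightarrow> 'k::field) \<in> EE"
proof -
  assume b: "odd_comp b"
  define c where "c x = (if x = b then 1 else (0::'k))" for x
  have "{x. c x \<noteq> 0} = {b}" by (auto simp: c_def)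
  then have "okc c \<and> eta b = lc c" using b by (auto simp: okc_def lc_def c_def)
  then show ?thesis by (auto simp: EE_def)
qed

lemma EE_sum: "finite A \<Longrightarrow> (\<And>x. x \<in> A \<Longrightarrow> g x \<in> EE) \<Longrightarrow> (\<lambda>a. \<Sum>x\<in>A. g x a) \<in> EE"
proof (induction A rule: finite_induct)
  case empty then show ?case using EE_zero by simp
next
  case (insert x F)
  have "(\<lambda>a. g x a + (\<Sum>y\<in>F. g y a)) \<in> EE"
    using insert by (intro EE_add) auto
  then show ?case using insert by simp
qed

lemma EE_lc_TT:
  assumes "okc c"
  shows "lc c a = (\<Sum>b\<in>{b. c b \<noteq> 0}. c b * TT b a)"
  unfolding lc_def using assms by (intro sum.cong refl) (simp add: okc_def TT_odd_eta)

lemma EE_QSym: "(f :: nat list \<Rightarrow> 'k::field) \<in> EE \<Longrightarrow> f \<in> QSym"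
proof -
  assume "f \<in> EE"
  then obtain c where c: "okc c" "f = lc c" by (auto simp: EE_def)
  define B where "B = {b. c b \<noteq> 0}"
  have B: "finite B" using c by (simp add: okc_def B_def)
  have "{a. f a \<noteq> 0} \<subseteq> (\<Union>b\<in>B. comps (sum_list b))"
  proof
    fix a assume "a \<in> {a. f a \<noteq> 0}"
    then have "(\<Sum>b\<in>B. c b * eta b a) \<noteq> 0" using c by (simp add: lc_def B_def)
    then obtain b where "b \<in> B" "c b * eta b a \<noteq> 0" by (rule sum.not_neutral_contains_not_neutral)
    then have "b \<in> B" "(eta b a :: 'k) \<noteq> 0" by auto
    then show "a \<in> (\<Union>b\<in>B. comps (sum_list b))" by (auto dest!: eta_supp simp: comp_le_def)
  qed
  moreover have "finite (\<Union>b\<in>B. comps (sum_list b))" using B by (simp add: finite_comps)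
  ultimately have "finite {a. f a \<noteq> 0}" by (rule finite_subset)
  moreover have "is_comp a" if "f a \<noteq> 0" for a
  proof -
    have "(\<Sum>b\<in>B. c b * eta b a) \<noteq> 0" using that c by (simp add: lc_def B_def)
    then obtain b where "c b * eta b a \<noteq> 0" by (rule sum.not_neutral_contains_not_neutral)
    then have "(eta b a :: 'k) \<noteq> 0" by auto
    then show ?thesis by (auto dest!: eta_supp simp: comp_le_def)
  qed
  ultimately show ?thesis by (auto simp: QSym_def)
qed

lemma EE_hom: "f \<in> EE \<Longrightarrow> hom_comp n f \<in> EE"
proof -
  assume "f \<in> EE"
  then obtain c1 where c1: "okc c1" "f = lc c1" by (auto simp: EE_def)
  define S where "S = {b. c1 b \<noteq> 0}"
  have S: "finite S" using c1 by (auto simp: okc_def S_def)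
  define c where "c b = (if sum_list b = n then c1 b else 0)" for b
  have sub: "{b. c b \<noteq> 0} \<subseteq> S" by (auto simp: c_def S_def)
  have "okc c" using c1 sub S by (auto simp: okc_def c_def intro: finite_subset)
  moreover have "hom_comp n f = lc c"
  proof
    fix a
    have "lc c a = (\<Sum>b\<in>S. c b * eta b a)" by (rule lc_superset[OF S sub])
    also have "\<dots> = (\<Sum>b\<in>S. if sum_list a = n then c1 b * eta b a else 0)"
      by (intro sum.cong refl) (auto simp: c_def eta_def comp_le_def)
    also have "\<dots> = hom_comp n f a" using c1 S by (simp add: lc_superset S_def hom_comp_def)
    finally show "hom_comp n f a = lc c a" by simp
  qed
  ultimately show ?thesis by (auto simp: EE_def)
qed

lemma eta_append:
  assumes "odd_comp b"
  shows "eta b (x @ y) = (\<Sum>i\<le>length b. eta (take i b) x * (eta (drop i b) y :: 'k::field))"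
proof (cases "is_comp x \<and> is_comp y")
  case True
  have bc: "is_comp b" using assms by (simp add: odd_comp_def)
  have "eta b (x @ y) = (TT b (x @ y) :: 'k)" by (simp add: TT_odd_eta[OF assms])
  also have "\<dots> = (\<Sum>i\<le>length b. TT (take i b) x * TT (drop i b) y)" using True bc by (intro TT_append) auto
  also have "\<dots> = (\<Sum>i\<le>length b. eta (take i b) x * (eta (drop i b) y :: 'k))"
    by (simp add: TT_odd_eta[OF odd_comp_take[OF assms]] TT_odd_eta[OF odd_comp_drop[OF assms]])
  finally show ?thesis .
next
  case False
  then show ?thesis by (auto simp: eta_def comp_le_def intro!: sum.neutral)
qed



lemma sum_list_concat_map: "sum_list (map h (concat L)) = sum_list (map (\<lambda>l. sum_list (map h l)) L)"
  by (induction L) auto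

lemma sum_sum_list_swap: "(\<Sum>c\<in>S. sum_list (map (\<lambda>p. F p c) ps)) = sum_list (map (\<lambda>p. \<Sum>c\<in>S. F p c) ps)"
  by (induction ps) (auto simp: sum.distrib)

lemma EE_coprod: "(f :: nat list \<Rightarrow> 'k::field) \<in> EE \<Longrightarrow> in_tensor_sq EE (coprod f)"
proof -
  assume "f \<in> EE"
  then obtain c where c: "okc c" "f = lc c" by (auto simp: EE_def)
  define B where "B = {b. c b \<noteq> 0}"
  have B: "finite B" using c by (simp add: okc_def B_def)
  have Bodd: "\<And>b. b \<in> B \<Longrightarrow> odd_comp b" using c by (auto simp: okc_def B_def)
  obtain bl where bl: "set bl = B" "distinct bl" using finite_distinct_list[OF B] by blast
  define G where "G b = map (\<lambda>i. ((\<lambda>a. c b * eta (take i b) a), (eta (drop i b) :: nat list \<Rightarrow> 'k))) [0..<Suc (length b)]" for b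
  define ps where "ps = concat (map G bl)"
  have "\<forall>p\<in>set ps. fst p \<in> EE \<and> snd p \<in> EE"
  proof
    fix p assume "p \<in> set ps"
    then obtain b where b0: "b \<in> set bl" "p \<in> set (G b)" by (auto simp: ps_def)
    have "p \<in> (\<lambda>i. ((\<lambda>a. c b * eta (take i b) a), (eta (drop i b) :: nat list \<Rightarrow> 'k))) ` set [0..<Suc (length b)]"
      using b0(2) unfolding G_def by (simp only: set_map)
    then obtain i where p: "p = ((\<lambda>a. c b * eta (take i b) a), eta (drop i b))" by blast
    have b: "b \<in> B" using b0 bl by simp
    have "fst p \<in> EE" unfolding p fst_conv
      by (intro EE_smult EE_eta odd_comp_take Bodd b)
    moreover have "snd p \<in> EE" unfolding p snd_conv
      by (intro EE_eta odd_comp_drop Bodd b)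
    ultimately show "fst p \<in> EE \<and> snd p \<in> EE" by simp
  qed
  moreover have "coprod f = (\<lambda>x. sum_list (map (\<lambda>p. tens (fst p) (snd p) x) ps))"
  proof
    fix x :: "nat list \<times> nat list"
    obtain u v where x: "x = (u, v)" by (cases x)
    have "coprod f x = f (u @ v)" by (simp add: coprod_def x)
    also have "\<dots> = (\<Sum>b\<in>B. c b * eta b (u @ v))" by (simp add: c lc_def B_def)
    also have "\<dots> = (\<Sum>b\<in>B. \<Sum>i\<le>length b. c b * eta (take i b) u * eta (drop i b) v)"
      by (intro sum.cong refl) (simp add: eta_append Bodd sum_distrib_left mult.assoc)
    also have "\<dots> = (\<Sum>b\<in>B. sum_list (map (\<lambda>p. tens (fst p) (snd p) x) (G b)))"
    proof (intro sum.cong refl)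
      fix b
      have "sum_list (map (\<lambda>p. tens (fst p) (snd p) x) (G b)) =
            sum_list (map (\<lambda>i. c b * eta (take i b) u * eta (drop i b) v) [0..<Suc (length b)])"
        by (simp add: G_def tens_def x comp_def)
      also have "\<dots> = (\<Sum>i\<in>set [0..<Suc (length b)]. c b * eta (take i b) u * eta (drop i b) v)"
        by (rule sum_set_upt_conv_sum_list_nat[symmetric])
      also have "set [0..<Suc (length b)] = {..length b}" by auto
      finally show "(\<Sum>i\<le>length b. c b * eta (take i b) u * eta (drop i b) v) =
            sum_list (map (\<lambda>p. tens (fst p) (snd p) x) (G b))" by simp
    qed
    also have "\<dots> = sum_list (map (\<lambda>b. sum_list (map (\<lambda>p. tens (fst p) (snd p) x) (G b))) bl)"
      using bl by (simp add: sum_list_distinct_conv_sum_set)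
    also have "\<dots> = sum_list (map (\<lambda>p. tens (fst p) (snd p) x) ps)"
      by (simp add: ps_def sum_list_concat_map comp_def)
    finally show "coprod f x = sum_list (map (\<lambda>p. tens (fst p) (snd p) x) ps)" .
  qed
  ultimately show ?thesis unfolding in_tensor_sq_def by blast
qed

lemma TT_zero: "sum_list a \<noteq> sum_list b \<Longrightarrow> TT b a = 0"
  using TT_supp by metis

lemma lc_supp:
  assumes "okc c" "lc c a \<noteq> 0"
  shows "\<exists>b. c b \<noteq> 0 \<and> comp_le a b"
proof -
  have "(\<Sum>b\<in>{b. c b \<noteq> 0}. c b * eta b a) \<noteq> 0" using assms by (simp add: lc_def)
  then obtain b where "b \<in> {b. c b \<noteq> 0}" "c b * eta b a \<noteq> 0" by (rule sum.not_neutral_contains_not_neutral)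
  then show ?thesis by (auto dest: eta_supp)
qed

lemma EE_L:
  assumes "(f :: nat list \<Rightarrow> 'k::field) \<in> EE"
  shows "evalf (bar zetaQ) f = evalf (conv_inv zetaQ) f"
proof -
  obtain c where c: "okc c" "f = lc c" using assms by (auto simp: EE_def)
  define B where "B = {b. c b \<noteq> 0}"
  have B: "finite B" using c by (simp add: okc_def B_def)
  have Bodd: "\<And>b. b \<in> B \<Longrightarrow> odd_comp b" using c by (auto simp: okc_def B_def)
  define S where "S = (\<Union>b\<in>B. comps (sum_list b))"
  have S: "finite S" using B by (simp add: S_def finite_comps)
  have sub: "{a. f a \<noteq> 0} \<subseteq> S"
    using lc_supp[OF c(1)] c(2) by (fastforce simp: S_def B_def comp_le_def)
  have "evalf (bar zetaQ) f - evalf (conv_inv zetaQ) f = (\<Sum>a\<in>S. f a * Lf a)"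
    by (simp add: evalf_supp[OF S sub] Lf_def sum_subtractf algebra_simps)
  also have "\<dots> = (\<Sum>a\<in>S. \<Sum>b\<in>B. c b * (TT b a * Lf a))"
    by (simp add: c EE_lc_TT[OF c(1)] B_def sum_distrib_right mult.assoc)
  also have "\<dots> = (\<Sum>b\<in>B. c b * (\<Sum>a\<in>S. TT b a * Lf a))"
    by (subst sum.swap) (simp add: sum_distrib_left)
  also have "\<dots> = 0"
  proof (intro sum.neutral ballI)
    fix b assume b: "b \<in> B"
    have "(\<Sum>a\<in>S. TT b a * Lf a) = (\<Sum>a\<in>comps (sum_list b). TT b a * (Lf a :: 'k))"
      using b S by (intro sum.mono_neutral_right) (auto simp: S_def TT_zero)
    also have "\<dots> = 0" using Bodd[OF b] by (intro TT_L) (simp add: odd_comp_def)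
    finally show "c b * (\<Sum>a\<in>S. TT b a * Lf a) = 0" by simp
  qed
  finally show ?thesis by simp
qed

lemma EE_Rel: "(f :: nat list \<Rightarrow> 'k::field) \<in> EE \<Longrightarrow> Rel f"
proof -
  assume "f \<in> EE"
  then obtain c where c: "okc c" "f = lc c" by (auto simp: EE_def)
  define B where "B = {b. c b \<noteq> 0}"
  have Bodd: "\<And>b. b \<in> B \<Longrightarrow> odd_comp b" using c by (auto simp: okc_def B_def)
  show "Rel f" unfolding Rel_def
  proof (intro allI)
    fix b d n
    have "(\<Sum>x\<in>comps n. f (b @ x @ d) * Lf x) = (\<Sum>x\<in>comps n. \<Sum>\<beta>\<in>B. c \<beta> * (TT \<beta> (b @ x @ d) * Lf x))"
      by (simp add: c EE_lc_TT[OF c(1)] B_def sum_distrib_right mult.assoc)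
    also have "\<dots> = (\<Sum>\<beta>\<in>B. c \<beta> * (\<Sum>x\<in>comps n. TT \<beta> (b @ x @ d) * Lf x))"
      by (subst sum.swap) (simp add: sum_distrib_left)
    also have "\<dots> = 0"
    proof (intro sum.neutral ballI)
      fix \<beta> assume "\<beta> \<in> B"
      then have "is_comp \<beta>" using Bodd by (simp add: odd_comp_def)
      then have "Rel (TT \<beta> :: nat list \<Rightarrow> 'k)" by (rule TT_Rel)
      then show "c \<beta> * (\<Sum>x\<in>comps n. TT \<beta> (b @ x @ d) * Lf x) = 0" unfolding Rel_def by simp
    qed
    finally show "(\<Sum>x\<in>comps n. f (b @ x @ d) * Lf x) = 0" .
  qed
qed

lemma Rel_diff: "Rel f \<Longrightarrow> Rel g \<Longrightarrow> Rel (\<lambda>a. f a - g a)"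
  unfolding Rel_def by (simp add: algebra_simps sum_subtractf)

lemma odd_ok_EE: "odd_ok (EE :: (nat list \<Rightarrow> 'k::field) set)"
  unfolding odd_ok_def graded_subcoalgebra_def is_subspace_def
proof (intro conjI ballI allI)
  show "EE \<subseteq> (QSym :: (nat list \<Rightarrow> 'k) set)" using EE_QSym by blast
  show "(\<lambda>_. 0 :: 'k) \<in> EE" by (rule EE_zero)
  fix f :: "nat list \<Rightarrow> 'k" assume f: "f \<in> EE"
  show "hom_comp n f \<in> EE" for n using f by (rule EE_hom)
  show "in_tensor_sq EE (coprod f)" using f by (rule EE_coprod)
  show "evalf (bar zetaQ) f = evalf (conv_inv zetaQ) f" using f by (rule EE_L)
  show "(\<lambda>a. k * f a) \<in> EE" for k using f by (rule EE_smult)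
  fix g :: "nat list \<Rightarrow> 'k" assume g: "g \<in> EE"
  show "(\<lambda>a. f a + g a) \<in> EE" using f g by (rule EE_add)
qed

lemma odd_ok_Rel:
  assumes D: "odd_ok (D :: (nat list \<Rightarrow> 'k::field) set)" and f: "f \<in> D"
  shows "Rel f"
proof -
  have sub: "D \<subseteq> QSym" and hom: "\<And>g n. g \<in> D \<Longrightarrow> hom_comp n g \<in> D"
    and tens: "\<And>g. g \<in> D \<Longrightarrow> in_tensor_sq D (coprod g)"
    and L: "\<And>g. g \<in> D \<Longrightarrow> evalf (bar zetaQ) g = evalf (conv_inv zetaQ) g"
    using D unfolding odd_ok_def graded_subcoalgebra_def is_subspace_def by blast+
  have A: "(\<Sum>c\<in>comps n. g c * Lf c) = 0" if g: "g \<in> D" for g n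
  proof -
    define h where "h = hom_comp n g"
    have hD: "h \<in> D" using hom g by (simp add: h_def)
    have gQ: "g \<in> QSym" using sub g by auto
    have hs: "{a. h a \<noteq> 0} \<subseteq> comps n" using gQ by (auto simp: h_def hom_comp_def QSym_def)
    have "0 = evalf (bar zetaQ) h - evalf (conv_inv zetaQ) h" using L[OF hD] by simp
    also have "\<dots> = (\<Sum>c\<in>comps n. h c * Lf c)"
      by (simp add: evalf_supp[OF finite_comps hs] Lf_def sum_subtractf algebra_simps)
    also have "\<dots> = (\<Sum>c\<in>comps n. g c * Lf c)" by (intro sum.cong refl) (simp add: h_def hom_comp_def)
    finally show ?thesis by simp
  qed
  have split: "g (x @ y) = sum_list (map (\<lambda>p. fst p x * snd p y) ps)"
    if "coprod g = (\<lambda>x. sum_list (map (\<lambda>p. tens (fst p) (snd p) x) ps))" for g x y and ps :: "((nat list \<Rightarrow> 'k) \<times> (nat list \<Rightarrow> 'k)) list"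
  proof -
    have "coprod g (x, y) = sum_list (map (\<lambda>p. tens (fst p) (snd p) (x, y)) ps)" using that by simp
    then show ?thesis by (simp add: coprod_def tens_def)
  qed
  have B: "(\<Sum>c\<in>comps n. g (c @ d) * Lf c) = 0" if g: "g \<in> D" for g n d
  proof -
    obtain ps where ps: "\<forall>p\<in>set ps. fst p \<in> D \<and> snd p \<in> D"
      "coprod g = (\<lambda>x. sum_list (map (\<lambda>p. tens (fst p) (snd p) x) ps))"
      using tens[OF g] unfolding in_tensor_sq_def by blast
    have "(\<Sum>c\<in>comps n. g (c @ d) * Lf c) = (\<Sum>c\<in>comps n. sum_list (map (\<lambda>p. snd p d * (fst p c * Lf c)) ps))"
      by (intro sum.cong refl) (simp only: split[OF ps(2)] sum_list_mult_const[symmetric], simp add: mult_ac)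
    also have "\<dots> = sum_list (map (\<lambda>p. snd p d * (\<Sum>c\<in>comps n. fst p c * Lf c)) ps)"
      by (simp add: sum_sum_list_swap sum_distrib_left)
    also have "\<dots> = 0" using ps(1) A by (subst sum_list_cong_set[where g="\<lambda>_. 0"]) auto
    finally show ?thesis .
  qed
  show ?thesis unfolding Rel_def
  proof (intro allI)
    fix b d n
    obtain ps where ps: "\<forall>p\<in>set ps. fst p \<in> D \<and> snd p \<in> D"
      "coprod f = (\<lambda>x. sum_list (map (\<lambda>p. tens (fst p) (snd p) x) ps))"
      using tens[OF f] unfolding in_tensor_sq_def by blast
    have "(\<Sum>c\<in>comps n. f (b @ c @ d) * Lf c) = (\<Sum>c\<in>comps n. sum_list (map (\<lambda>p. fst p b * (snd p (c @ d) * Lf c)) ps))"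
      by (intro sum.cong refl) (simp only: split[OF ps(2)] sum_list_mult_const[symmetric], simp add: mult_ac)
    also have "\<dots> = sum_list (map (\<lambda>p. fst p b * (\<Sum>c\<in>comps n. snd p (c @ d) * Lf c)) ps)"
      by (simp add: sum_sum_list_swap sum_distrib_left)
    also have "\<dots> = 0" using ps(1) B by (subst sum_list_cong_set[where g="\<lambda>_. 0"]) auto
    finally show "(\<Sum>c\<in>comps n. f (b @ c @ d) * Lf c) = 0" .
  qed
qed



lemma QSym_diff: "f \<in> QSym \<Longrightarrow> g \<in> QSym \<Longrightarrow> (\<lambda>a. f a - g a) \<in> QSym"
proof -
  assume f: "f \<in> QSym" and g: "g \<in> QSym"
  have "{a. f a - g a \<noteq> 0} \<subseteq> {a. f a \<noteq> 0} \<union> {a. g a \<noteq> 0}" by auto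
  moreover have "finite ({a. f a \<noteq> 0} \<union> {a. g a \<noteq> 0})" using f g by (simp add: QSym_def)
  ultimately have "finite {a. f a - g a \<noteq> 0}" by (rule finite_subset)
  moreover have "is_comp a" if "f a - g a \<noteq> 0" for a
    using that f g by (cases "f a = 0") (auto simp: QSym_def)
  ultimately show ?thesis by (simp add: QSym_def)
qed

lemma comps_len2: "c \<in> comps e \<Longrightarrow> c \<noteq> [e] \<Longrightarrow> 0 < e \<Longrightarrow> 2 \<le> length c"
proof (rule ccontr)
  assume c: "c \<in> comps e" "c \<noteq> [e]" "0 < e" "\<not> 2 \<le> length c"
  then have "length c = 0 \<or> length c = 1" by linarith
  then show False using c by (auto simp: length_Suc_conv)
qed

lemma upper_step:
  assumes two: "(2::'k::field) \<noteq> 0"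
    and fQ: "(f :: nat list \<Rightarrow> 'k) \<in> QSym" and fR: "Rel f" and fK: "\<forall>a. f a \<noteq> 0 \<longrightarrow> length a \<le> K"
  shows "\<exists>h\<in>EE. (\<lambda>a. f a - h a) \<in> QSym \<and> Rel (\<lambda>a. f a - h a) \<and> (\<forall>a. f a - h a \<noteq> 0 \<longrightarrow> length a < K)"
proof -
  define A where "A = {\<alpha>. f \<alpha> \<noteq> 0 \<and> odd_comp \<alpha> \<and> length \<alpha> = K}"
  have A: "finite A" using fQ unfolding A_def QSym_def by (auto intro: finite_subset)
  define h where "h a = (\<Sum>\<alpha>\<in>A. f \<alpha> / 2 ^ K * eta \<alpha> a)" for a
  have hE: "h \<in> EE" unfolding h_def
    by (intro EE_sum A EE_smult EE_eta) (auto simp: A_def)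
  define g where "g a = f a - h a" for a
  have gQ: "g \<in> QSym" unfolding g_def using QSym_diff[OF fQ EE_QSym[OF hE]] .
  have gR: "Rel g" unfolding g_def using Rel_diff[OF fR EE_Rel[OF hE]] .
  have hK: "length a \<le> K" if ha: "h a \<noteq> 0" for a
  proof -
    have "(\<Sum>\<alpha>\<in>A. f \<alpha> / 2 ^ K * eta \<alpha> a) \<noteq> 0" using ha by (simp add: h_def)
    then obtain \<alpha> where "\<alpha> \<in> A" "f \<alpha> / 2 ^ K * eta \<alpha> a \<noteq> 0"
      by (rule sum.not_neutral_contains_not_neutral)
    then have "comp_le a \<alpha>" "length \<alpha> = K" by (auto simp: A_def dest: eta_supp)
    then show ?thesis using comp_le_length by fastforce
  qed
  have gK: "length a \<le> K" if "g a \<noteq> 0" for a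
    using that fK hK unfolding g_def by (cases "f a = 0") auto
  have g0: "g \<gamma> = 0" if \<gamma>: "length \<gamma> = K" for \<gamma>
  proof (cases "is_comp \<gamma>")
    case False
    then have "f \<gamma> = 0" "h \<gamma> = 0" using fQ EE_QSym[OF hE] by (auto simp: QSym_def)
    then show ?thesis by (simp add: g_def)
  next
    case True
    show ?thesis
    proof (cases "odd_comp \<gamma>")
      case True
      have "h \<gamma> = (\<Sum>\<alpha>\<in>A. if \<alpha> = \<gamma> then f \<gamma> else 0)"
        unfolding h_def
      proof (intro sum.cong refl)
        fix \<alpha> assume \<alpha>: "\<alpha> \<in> A"
        show "f \<alpha> / 2 ^ K * eta \<alpha> \<gamma> = (if \<alpha> = \<gamma> then f \<gamma> else 0)"
        proof (cases "\<alpha> = \<gamma>")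
          case True
          then show ?thesis using \<gamma> \<open>odd_comp \<gamma>\<close> two by (simp add: eta_self odd_comp_def)
        next
          case False
          have "(eta \<alpha> \<gamma> :: 'k) = 0"
          proof (rule ccontr)
            assume "eta \<alpha> \<gamma> \<noteq> 0"
            then have "comp_le \<gamma> \<alpha>" by (rule eta_supp)
            then have "\<gamma> = \<alpha>" using \<alpha> \<gamma> by (intro comp_le_length_eq) (auto simp: A_def)
            then show False using False by simp
          qed
          then show ?thesis using False by simp
        qed
      qed
      also have "\<dots> = (if \<gamma> \<in> A then f \<gamma> else 0)" using A by (simp add: sum.delta')
      also have "\<dots> = f \<gamma>" using True \<gamma> by (auto simp: A_def)
      finally show ?thesis by (simp add: g_def)
    next
      case False
      then obtain i where i: "i < length \<gamma>" "even (\<gamma> ! i)" using \<open>is_comp \<gamma>\<close>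
        by (auto simp: odd_comp_def in_set_conv_nth)
      define b where "b = take i \<gamma>"
      define e where "e = \<gamma> ! i"
      define d where "d = drop (Suc i) \<gamma>"
      have \<gamma>eq: "\<gamma> = b @ [e] @ d" unfolding b_def e_def d_def using i by (simp add: id_take_nth_drop)
      have e: "0 < e" "even e" using \<open>is_comp \<gamma>\<close> i unfolding e_def by (auto simp: is_comp_def)
      have "0 = (\<Sum>c\<in>comps e. g (b @ c @ d) * Lf c)" using gR by (simp add: Rel_def)
      also have "\<dots> = (\<Sum>c\<in>{[e]}. g (b @ c @ d) * Lf c)"
      proof (rule sum.mono_neutral_right)
        show "finite (comps e)" by (rule finite_comps)
        show "{[e]} \<subseteq> comps e" using e by auto
        show "\<forall>c\<in>comps e - {[e]}. g (b @ c @ d) * Lf c = 0"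
        proof
          fix c assume c: "c \<in> comps e - {[e]}"
          then have "2 \<le> length c" using comps_len2 e by blast
          then have "\<not> length (b @ c @ d) \<le> K" using \<gamma> \<gamma>eq by auto
          then have "g (b @ c @ d) = 0" using gK by blast
          then show "g (b @ c @ d) * Lf c = 0" by simp
        qed
      qed
      also have "\<dots> = g \<gamma> * 2" using e \<gamma>eq by (simp add: Lf_comp zeta0_def)
      finally show ?thesis using two by simp
    qed
  qed
  have "\<forall>a. g a \<noteq> 0 \<longrightarrow> length a < K"
  proof (intro allI impI)
    fix a assume "g a \<noteq> 0"
    then show "length a < K" using gK g0 by (metis le_neq_implies_less)
  qed
  then show ?thesis using hE gQ gR unfolding g_def by blast
qed

lemma upper:
  assumes two: "(2::'k::field) \<noteq> 0"
  shows "(f :: nat list \<Rightarrow> 'k) \<in> QSym \<Longrightarrow> Rel f \<Longrightarrow> \<forall>a. f a \<noteq> 0 \<longrightarrow> length a \<le> K \<Longrightarrow> f \<in> EE"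
proof (induction K arbitrary: f)
  case 0
  obtain h where h: "h \<in> EE" "\<forall>a. f a - h a \<noteq> 0 \<longrightarrow> length a < 0"
    using upper_step[OF two 0(1,2,3)] by blast
  then have "f = h" by auto
  then show ?case using h by simp
next
  case (Suc K)
  obtain h where h: "h \<in> EE" "(\<lambda>a. f a - h a) \<in> QSym" "Rel (\<lambda>a. f a - h a)"
     "\<forall>a. f a - h a \<noteq> 0 \<longrightarrow> length a < Suc K"
    using upper_step[OF two Suc.prems] by blast
  have "(\<lambda>a. f a - h a) \<in> EE" using h by (intro Suc.IH) auto
  then have "(\<lambda>a. (f a - h a) + h a) \<in> EE" using h(1) by (rule EE_add)
  then show ?case by simp
qed

lemma QSym_bounded: "f \<in> QSym \<Longrightarrow> \<exists>K. \<forall>a. f a \<noteq> 0 \<longrightarrow> length a \<le> K"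
proof -
  assume "f \<in> QSym"
  then have "finite {a. f a \<noteq> 0}" by (simp add: QSym_def)
  then have "finite (length ` {a. f a \<noteq> 0})" by simp
  then obtain K where "\<forall>n\<in>length ` {a. f a \<noteq> 0}. n \<le> K" using finite_nat_set_iff_bounded_le by blast
  then show ?thesis by auto
qed

lemma TT_in_EE:
  assumes two: "(2::'k::field) \<noteq> 0" and a: "is_comp a"
  shows "(TT a :: nat list \<Rightarrow> 'k) \<in> EE"
proof (rule upper[OF two])
  have "{c. (TT a c :: 'k) \<noteq> 0} \<subseteq> comps (sum_list a)" by (auto dest: TT_supp)
  then show "(TT a :: nat list \<Rightarrow> 'k) \<in> QSym"
    by (auto simp: QSym_def finite_comps intro: finite_subset dest: TT_supp)
  show "Rel (TT a :: nat list \<Rightarrow> 'k)" using a by (rule TT_Rel)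
  show "\<forall>c. (TT a c :: 'k) \<noteq> 0 \<longrightarrow> length c \<le> sum_list a"
  proof (intro allI impI)
    fix c assume "(TT a c :: 'k) \<noteq> 0"
    then have "is_comp c" "sum_list c = sum_list a" using TT_supp by blast+
    then show "length c \<le> sum_list a" using comp_len_le_sum by fastforce
  qed
qed

lemma Pi_minus_EE:
  assumes two: "(2::'k::field) \<noteq> 0"
  shows "(Pi_minus :: (nat list \<Rightarrow> 'k) set) = EE"
proof -
  have max: "D \<subseteq> EE" if "odd_ok (D :: (nat list \<Rightarrow> 'k) set)" for D
  proof
    fix f assume f: "f \<in> D"
    have fQ: "f \<in> QSym" using that f unfolding odd_ok_def graded_subcoalgebra_def is_subspace_def by blast
    obtain K where "\<forall>a. f a \<noteq> 0 \<longrightarrow> length a \<le> K" using QSym_bounded[OF fQ] by blast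
    then show "f \<in> EE" using upper[OF two fQ odd_ok_Rel[OF that f]] by blast
  qed
  show ?thesis unfolding Pi_minus_def
  proof (rule the_equality)
    show "odd_ok EE \<and> (\<forall>D. odd_ok D \<longrightarrow> D \<subseteq> (EE :: (nat list \<Rightarrow> 'k) set))"
      using odd_ok_EE max by blast
    fix C :: "(nat list \<Rightarrow> 'k) set" assume C: "odd_ok C \<and> (\<forall>D. odd_ok D \<longrightarrow> D \<subseteq> C)"
    then have "C \<subseteq> EE" using max by blast
    moreover have "EE \<subseteq> C" using C odd_ok_EE by blast
    ultimately show "C = EE" by blast
  qed
qed

lemma Theta_image_EE:
  assumes two: "(2::'k::field) \<noteq> 0"
  shows "(Theta_image :: (nat list \<Rightarrow> 'k) set) = EE"
proof
  show "(Theta_image :: (nat list \<Rightarrow> 'k) set) \<subseteq> EE"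
  proof
    fix F assume "F \<in> (Theta_image :: (nat list \<Rightarrow> 'k) set)"
    then obtain f where f: "f \<in> QSym" "F = apply_mat TT f"
      by (auto simp: Theta_image_def Theta_mat_eq)
    have "(\<lambda>b. \<Sum>a\<in>{a. f a \<noteq> 0}. f a * TT a b) \<in> EE"
    proof (rule EE_sum)
      show "finite {a. f a \<noteq> 0}" using f by (simp add: QSym_def)
      fix a assume "a \<in> {a. f a \<noteq> 0}"
      then have "is_comp a" using f by (simp add: QSym_def)
      then show "(\<lambda>b. f a * TT a b) \<in> EE" by (intro EE_smult TT_in_EE two)
    qed
    then show "F \<in> EE" using f by (simp add: apply_mat_def)
  qed
next
  show "EE \<subseteq> (Theta_image :: (nat list \<Rightarrow> 'k) set)"
  proof
    fix F :: "nat list \<Rightarrow> 'k" assume "F \<in> EE"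
    then obtain c where c: "okc c" "F = lc c" by (auto simp: EE_def)
    have cQ: "c \<in> QSym" using c by (auto simp: okc_def QSym_def odd_comp_def)
    have "apply_mat TT c = lc c"
      unfolding apply_mat_def using EE_lc_TT[OF c(1)] by (simp add: fun_eq_iff)
    then have "F = apply_mat TT c" using c by simp
    then show "F \<in> Theta_image"
      unfolding Theta_image_def Theta_mat_eq using cQ by (rule image_eqI)
  qed
qed

lemma lc_indep:
  assumes two: "(2::'k::field) \<noteq> 0" and c: "okc (c :: nat list \<Rightarrow> 'k)" and z: "lc c = (\<lambda>_. 0)"
  shows "c = (\<lambda>_. 0)"
proof (rule ccontr)
  assume nz: "c \<noteq> (\<lambda>_. 0)"
  define B where "B = {b. c b \<noteq> 0}"
  have B: "finite B" "B \<noteq> {}" using c nz by (auto simp: okc_def B_def)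
  define m where "m = Max (length ` B)"
  have "m \<in> length ` B" unfolding m_def using B by (intro Max_in) auto
  then obtain \<beta> where \<beta>: "\<beta> \<in> B" "length \<beta> = m" by auto
  have mge: "length b \<le> m" if "b \<in> B" for b unfolding m_def using B that by (intro Max_ge) auto
  have \<beta>c: "is_comp \<beta>" using c \<beta> by (auto simp: okc_def B_def odd_comp_def)
  have "lc c \<beta> = (\<Sum>b\<in>B. if b = \<beta> then c \<beta> * 2 ^ m else 0)"
    unfolding lc_def B_def[symmetric]
  proof (intro sum.cong refl)
    fix b assume b: "b \<in> B"
    show "c b * eta b \<beta> = (if b = \<beta> then c \<beta> * 2 ^ m else 0)"
    proof (cases "b = \<beta>")
      case True then show ?thesis using \<beta> \<beta>c by (simp add: eta_self)
    next
      case False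
      have "(eta b \<beta> :: 'k) = 0"
      proof (rule ccontr)
        assume "eta b \<beta> \<noteq> 0"
        then have le: "comp_le \<beta> b" by (rule eta_supp)
        then have "length \<beta> \<le> length b" by (rule comp_le_length)
        then have leq: "length \<beta> = length b" using mge[OF b] \<beta> by simp
        have "\<beta> = b" using le leq by (rule comp_le_length_eq)
        then show False using False by simp
      qed
      then show ?thesis using False by simp
    qed
  qed
  also have "\<dots> = c \<beta> * 2 ^ m" using \<beta> B by (simp add: sum.delta')
  finally have "lc c \<beta> = c \<beta> * 2 ^ m" .
  moreover have "c \<beta> * 2 ^ m \<noteq> 0" using \<beta> two by (simp add: B_def)
  ultimately show False using z by simp
qed

lemma lc_unique:
  assumes two: "(2::'k::field) \<noteq> 0" and c1: "okc (c1 :: nat list \<Rightarrow> 'k)" and c2: "okc c2"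
    and eq: "lc c1 = lc c2"
  shows "c1 = c2"
proof -
  define d where "d b = c1 b - c2 b" for b
  define S where "S = {b. c1 b \<noteq> 0} \<union> {b. c2 b \<noteq> 0}"
  have S: "finite S" using c1 c2 by (auto simp: okc_def S_def)
  have sub: "{b. d b \<noteq> 0} \<subseteq> S" by (auto simp: d_def S_def)
  have dd: "d b \<noteq> 0 \<Longrightarrow> c1 b \<noteq> 0 \<or> c2 b \<noteq> 0" for b by (auto simp: d_def)
  have dok: "okc d" using c1 c2 sub S dd unfolding okc_def by (meson finite_subset)
  have "lc d = (\<lambda>_. 0)"
  proof
    fix a
    have "lc d a = (\<Sum>b\<in>S. d b * eta b a)" by (rule lc_superset[OF S sub])
    also have "\<dots> = (\<Sum>b\<in>S. c1 b * eta b a) - (\<Sum>b\<in>S. c2 b * eta b a)"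
      by (simp add: d_def algebra_simps sum_subtractf)
    also have "(\<Sum>b\<in>S. c1 b * eta b a) = lc c1 a" by (rule lc_superset[OF S, symmetric]) (auto simp: S_def)
    also have "(\<Sum>b\<in>S. c2 b * eta b a) = lc c2 a" by (rule lc_superset[OF S, symmetric]) (auto simp: S_def)
    finally show "lc d a = 0" using eq by simp
  qed
  then have "d = (\<lambda>_. 0)" using lc_indep[OF two dok] by blast
  then show ?thesis by (auto simp: d_def fun_eq_iff)
qed

theorem proposition6p5:
  assumes "CHAR('k::field) \<noteq> 2"
  shows "(Pi_minus :: (nat list \<Rightarrow> 'k) set) = Theta_image
    \<and> (\<forall>b. odd_comp b \<longrightarrow> (eta b :: nat list \<Rightarrow> 'k) \<in> Pi_minus)
    \<and> (\<forall>f \<in> (Pi_minus :: (nat list \<Rightarrow> 'k) set).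
         \<exists>!c :: nat list \<Rightarrow> 'k. finite {b. c b \<noteq> 0} \<and> (\<forall>b. c b \<noteq> 0 \<longrightarrow> odd_comp b) \<and>
            f = (\<lambda>a. \<Sum>b\<in>{b. c b \<noteq> 0}. c b * eta b a))"
proof -
  have two: "(2::'k) \<noteq> 0" using assms by (rule two_ne_zero_char)
  have PE: "(Pi_minus :: (nat list \<Rightarrow> 'k) set) = EE" by (rule Pi_minus_EE[OF two])
  have TE: "(Theta_image :: (nat list \<Rightarrow> 'k) set) = EE" by (rule Theta_image_EE[OF two])
  have 3: "\<exists>!c :: nat list \<Rightarrow> 'k. finite {b. c b \<noteq> 0} \<and> (\<forall>b. c b \<noteq> 0 \<longrightarrow> odd_comp b) \<and>
            f = (\<lambda>a. \<Sum>b\<in>{b. c b \<noteq> 0}. c b * eta b a)" if f: "f \<in> (EE :: (nat list \<Rightarrow> 'k) set)" for f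
  proof -
    obtain c where c: "okc c" "f = lc c" using f by (auto simp: EE_def)
    show ?thesis
    proof (rule ex1I[where a=c])
      show "finite {b. c b \<noteq> 0} \<and> (\<forall>b. c b \<noteq> 0 \<longrightarrow> odd_comp b) \<and> f = (\<lambda>a. \<Sum>b\<in>{b. c b \<noteq> 0}. c b * eta b a)"
        using c by (simp add: okc_def lc_def)
      fix c' assume c': "finite {b. c' b \<noteq> 0} \<and> (\<forall>b. c' b \<noteq> 0 \<longrightarrow> odd_comp b) \<and> f = (\<lambda>a. \<Sum>b\<in>{b. c' b \<noteq> 0}. c' b * eta b a)"
      then have "okc c'" "f = lc c'" by (simp_all add: okc_def lc_def)
      then show "c' = c" using lc_unique[OF two] c by metis
    qed
  qed
  show ?thesis unfolding PE TE using EE_eta 3 by blast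
qed


end
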